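(* Let $f:\Sigma\to\mathbb{S}^4_1$ be a non-isotropic conformal marginally trapped immersion with null Gauss map $G$. Then $f$ has identically zero mean curvature vector if and only if $G:\Sigma\to\mathbb{S}^3$ is a Willmore surface, i.e. its conformal invariants satisfy $k_{\bar z\bar z}+\frac{\bar s}{2}k=0$ for every local complex coordinate $z$.
   Context: $\mathbb{R}^5_1$ is $\mathbb{R}^5$ with $\langle x,y\rangle=x_0y_0+x_1y_1+x_2y_2+x_3y_3-x_4y_4$ (complex-bilinearly extended), $\mathbb{S}^4_1=\{\langle x,x\rangle=1\}$, future pointing means $\langle X,e_4\rangle<0$; $\mathcal L$ the light cone, $\mathbb{S}^3\cong P(\mathcal L)$. $f$ conformal spacelike immersion, $\langle f_z,f_{\bar z}\rangle=e^{2u}$; positively oriented orthonormal normal frame $\{N_1,N_2\}$: $\langle N_1,N_1\rangle=1,\langle N_2,N_2\rangle=-1,\langle N_1,N_2\rangle=0$, $N_2$ future pointing, orientation of $\nu(f)$; $\xi_1=\langle f_{zz},N_1\rangle$, $\xi_2=-\langle f_{zz},N_2\rangle$. $\mathbf H$: $f_{z\bar z}=-e^{2u}f+e^{2u}\mathbf H$; marginally trapped: $\langle\mathbf H,\mathbf H\rangle=0$, orientation with $\mathbf H=h(N_1+N_2)$. Non-isotropic: $\xi_1^2-\xi_2^2$ nowhere zero. Null Gauss map $G=[N_1+N_2]$. For a conformal immersion into $P(\mathcal L)$: canonical lift $Y$ (future light cone, $\langle Y_z,Y_{\bar z}\rangle=\frac12$), $V=\mathrm{span}\{Y,Y_z,Y_{\bar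 z},Y_{z\bar z}\}$, $N\in\Gamma(V)$ unique with $\langle N,N\rangle=\langle N,Y_z\rangle=0,\langle Y,N\rangle=-1$, Schwarzian $s=2\langle Y_{zz},N\rangle$, normal Hopf differential $\kappa=Y_{zz}+\frac s2Y$; for $G$, $V^\perp=\mathbb Rf$ and $k$ is the complex function with $\kappa=kf$. *)

theory Defs
  imports "HOL-Analysis.Analysis"
begin

(* Complexified Minkowski space R^5_1: vectors in complex^5 (components indexed 0..4),
   real vectors are those with vanishing imaginary parts. *)
type_synonym cvec = "complex ^ 5"

definition lor :: "cvec \<Rightarrow> cvec \<Rightarrow> complex" where
  "lor x y = x$0 * y$0 + x$1 * y$1 + x$2 * y$2 + x$3 * y$3 - x$4 * y$4"

definition realv :: "cvec \<Rightarrow> bool" where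
  "realv v \<longleftrightarrow> (\<forall>i. Im (v$i) = 0)"

definition e4 :: cvec where
  "e4 = (\<chi> i. if i = 4 then 1 else 0)"

definition future :: "cvec \<Rightarrow> bool" where
  "future X \<longleftrightarrow> realv X \<and> Re (lor X e4) < 0"

definition vre :: "cvec \<Rightarrow> cvec" where
  "vre v = (\<chi> i. complex_of_real (Re (v$i)))"

definition vim :: "cvec \<Rightarrow> cvec" where
  "vim v = (\<chi> i. complex_of_real (Im (v$i)))"

definition dx :: "(complex \<Rightarrow> 'a::real_normed_vector) \<Rightarrow> complex \<Rightarrow> 'a" where
  "dx g p = frechet_derivative g (at p) 1"

definition dy :: "(complex \<Rightarrow> 'a::real_normed_vector) \<Rightarrow> complex \<Rightarrow> 'a" where
  "dy g p = frechet_derivative g (at p) \<i>"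

fun pd :: "bool list \<Rightarrow> (complex \<Rightarrow> 'a::real_normed_vector) \<Rightarrow> complex \<Rightarrow> 'a" where
  "pd [] g = g"
| "pd (b # bs) g = (if b then dx else dy) (pd bs g)"

definition smooth_on :: "complex set \<Rightarrow> (complex \<Rightarrow> 'a::real_normed_vector) \<Rightarrow> bool" where
  "smooth_on U g \<longleftrightarrow> (\<forall>bs. \<forall>p\<in>U. pd bs g differentiable (at p))"

definition dz :: "(complex \<Rightarrow> cvec) \<Rightarrow> complex \<Rightarrow> cvec" where
  "dz g p = (1/2) *s (dx g p - \<i> *s dy g p)"

definition dzb :: "(complex \<Rightarrow> cvec) \<Rightarrow> complex \<Rightarrow> cvec" where
  "dzb g p = (1/2) *s (dx g p + \<i> *s dy g p)"

definition dzs :: "(complex \<Rightarrow> complex) \<Rightarrow> complex \<Rightarrow> complex" where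
  "dzs g p = (dx g p - \<i> * dy g p) / 2"

definition dzbs :: "(complex \<Rightarrow> complex) \<Rightarrow> complex \<Rightarrow> complex" where
  "dzbs g p = (dx g p + \<i> * dy g p) / 2"

definition e2u :: "(complex \<Rightarrow> cvec) \<Rightarrow> complex \<Rightarrow> real" where
  "e2u f p = Re (lor (dz f p) (dzb f p))"

(* conformal spacelike immersion on the coordinate domain U (z = identity coordinate) *)
definition conformal_spacelike_immersion :: "complex set \<Rightarrow> (complex \<Rightarrow> cvec) \<Rightarrow> bool" where
  "conformal_spacelike_immersion U f \<longleftrightarrow>
     open U \<and> smooth_on U f \<and>
     (\<forall>p\<in>U. realv (f p) \<and> lor (dz f p) (dz f p) = 0 \<and> e2u f p > 0)"

(* mean curvature vector:  f_{z zbar} = - e^{2u} f + e^{2u} H *)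
definition mean_curv :: "(complex \<Rightarrow> cvec) \<Rightarrow> complex \<Rightarrow> cvec" where
  "mean_curv f p = (1 / complex_of_real (e2u f p)) *s
      (dzb (dz f) p + complex_of_real (e2u f p) *s f p)"

definition normal_frame :: "complex set \<Rightarrow> (complex \<Rightarrow> cvec) \<Rightarrow> (complex \<Rightarrow> cvec) \<Rightarrow> (complex \<Rightarrow> cvec) \<Rightarrow> bool" where
  "normal_frame U f N1 N2 \<longleftrightarrow> smooth_on U N1 \<and> smooth_on U N2 \<and>
     (\<forall>p\<in>U. realv (N1 p) \<and> realv (N2 p) \<and>
        lor (N1 p) (N1 p) = 1 \<and> lor (N2 p) (N2 p) = -1 \<and> lor (N1 p) (N2 p) = 0 \<and>
        lor (N1 p) (f p) = 0 \<and> lor (N2 p) (f p) = 0 \<and>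
        lor (N1 p) (dz f p) = 0 \<and> lor (N2 p) (dz f p) = 0 \<and>
        future (N2 p))"

definition xi1 :: "(complex \<Rightarrow> cvec) \<Rightarrow> (complex \<Rightarrow> cvec) \<Rightarrow> complex \<Rightarrow> complex" where
  "xi1 f N1 p = lor (dz (dz f) p) (N1 p)"

definition xi2 :: "(complex \<Rightarrow> cvec) \<Rightarrow> (complex \<Rightarrow> cvec) \<Rightarrow> complex \<Rightarrow> complex" where
  "xi2 f N2 p = - lor (dz (dz f) p) (N2 p)"

(* canonical lift of the map [l] into P(L), for a future pointing null lift l:
   the positive rescaling Y of l with <Y_z, Y_zbar> = 1/2 *)
definition canon_lift :: "(complex \<Rightarrow> cvec) \<Rightarrow> complex \<Rightarrow> cvec" where
  "canon_lift l p = complex_of_real (1 / sqrt (2 * Re (lor (dz l p) (dzb l p)))) *s l p"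

(* V = span_R {Y, Y_z, Y_zbar, Y_{z zbar}} at p (real section) *)
definition Vspace :: "(complex \<Rightarrow> cvec) \<Rightarrow> complex \<Rightarrow> cvec set" where
  "Vspace Y p = {complex_of_real a *s Y p + complex_of_real b *s vre (dz Y p)
                 + complex_of_real c *s vim (dz Y p) + complex_of_real d *s vre (dzb (dz Y) p)
                 | a b c d. True}"

definition normalN :: "(complex \<Rightarrow> cvec) \<Rightarrow> complex \<Rightarrow> cvec" where
  "normalN Y p = (THE n. n \<in> Vspace Y p \<and> lor n n = 0 \<and> lor n (dz Y p) = 0 \<and> lor (Y p) n = -1)"

definition schwarzian :: "(complex \<Rightarrow> cvec) \<Rightarrow> complex \<Rightarrow> complex" where
  "schwarzian Y p = 2 * lor (dz (dz Y) p) (normalN Y p)"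

definition hopf_diff :: "(complex \<Rightarrow> cvec) \<Rightarrow> complex \<Rightarrow> cvec" where
  "hopf_diff Y p = dz (dz Y) p + (schwarzian Y p / 2) *s Y p"

definition kfun :: "(complex \<Rightarrow> cvec) \<Rightarrow> (complex \<Rightarrow> cvec) \<Rightarrow> complex \<Rightarrow> complex" where
  "kfun Y f p = (THE c. hopf_diff Y p = c *s f p)"

definition willmore_on :: "complex set \<Rightarrow> (complex \<Rightarrow> cvec) \<Rightarrow> (complex \<Rightarrow> cvec) \<Rightarrow> bool" where
  "willmore_on U Y f \<longleftrightarrow>
     (\<forall>p\<in>U. dzbs (dzbs (kfun Y f)) p + cnj (schwarzian Y p) / 2 * kfun Y f p = 0)"

end

theory Submission
  imports Defs
begin


definition Db :: "bool \<Rightarrow> (complex \<Rightarrow> 'a::real_normed_vector) \<Rightarrow> complex \<Rightarrow> 'a" where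
  "Db b = (if b then dx else dy)"

definition dir :: "bool \<Rightarrow> complex" where "dir b = (if b then 1 else \<i>)"

lemma Db_eq: "Db b g p = frechet_derivative g (at p) (dir b)"
  by (simp add: Db_def dir_def dx_def dy_def)

lemma pd_Cons: "pd (b # bs) g = Db b (pd bs g)"
  by (simp add: Db_def)

declare pd.simps(2)[simp del]

lemma pd_append: "pd (bs @ [b]) g = pd bs (Db b g)"
  by (induction bs) (simp_all add: pd_Cons pd.simps(1))

lemma Db_has: "(g has_derivative g') (at p) \<Longrightarrow> Db b g p = g' (dir b)"
  using Db_eq frechet_derivative_at by metis

lemma Db_local:
  assumes "open U" "p \<in> U" "\<forall>q\<in>U. g q = g' q"
  shows "Db b g p = Db b g' p"
proof -
  have "\<And>d. (g has_derivative d) (at p) \<longleftrightarrow> (g' has_derivative d) (at p)"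
    using assms has_derivative_transform_within_open by (metis (no_types, lifting))
  hence "frechet_derivative g (at p) = frechet_derivative g' (at p)"
    unfolding frechet_derivative_def by simp
  thus ?thesis by (simp add: Db_eq)
qed

lemma pd_local:
  assumes "open U" "\<forall>q\<in>U. g q = g' q"
  shows "\<forall>q\<in>U. pd bs g q = pd bs g' q"
  using assms(2)
proof (induction bs)
  case Nil thus ?case by simp
next
  case (Cons b bs)
  have "\<forall>q\<in>U. pd bs g q = pd bs g' q" using Cons.IH Cons.prems by blast
  thus ?case by (metis Db_local[OF assms(1)] pd_Cons)
qed

lemma differentiable_local:
  assumes "open U" "p \<in> U" "\<forall>q\<in>U. g q = g' q" "g differentiable (at p)"
  shows "g' differentiable (at p)"
  using assms has_derivative_transform_within_open unfolding differentiable_def by metis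

definition smoothn :: "nat \<Rightarrow> complex set \<Rightarrow> (complex \<Rightarrow> 'a::real_normed_vector) \<Rightarrow> bool" where
  "smoothn n U g \<longleftrightarrow> (\<forall>bs. length bs \<le> n \<longrightarrow> (\<forall>p\<in>U. pd bs g differentiable (at p)))"

lemma smooth_on_n: "smooth_on U g \<longleftrightarrow> (\<forall>n. smoothn n U g)"
  unfolding smooth_on_def smoothn_def by auto

lemma smoothn_Suc: "smoothn (Suc n) U g \<longleftrightarrow>
   (\<forall>p\<in>U. g differentiable (at p)) \<and> (\<forall>b. smoothn n U (Db b g))"
proof
  assume A: "smoothn (Suc n) U g"
  have "\<forall>p\<in>U. g differentiable (at p)" using A unfolding smoothn_def
    by (metis le0 list.size(3) pd.simps(1))
  moreover have "smoothn n U (Db b g)" for b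
    unfolding smoothn_def
  proof (intro allI impI)
    fix bs :: "bool list" assume "length bs \<le> n"
    thus "\<forall>p\<in>U. pd bs (Db b g) differentiable at p"
      using A unfolding smoothn_def by (metis pd_append length_append_singleton not_less_eq_eq)
  qed
  ultimately show "(\<forall>p\<in>U. g differentiable (at p)) \<and> (\<forall>b. smoothn n U (Db b g))" by blast
next
  assume A: "(\<forall>p\<in>U. g differentiable (at p)) \<and> (\<forall>b. smoothn n U (Db b g))"
  show "smoothn (Suc n) U g" unfolding smoothn_def
  proof (intro allI impI)
    fix bs :: "bool list" assume L: "length bs \<le> Suc n"
    show "\<forall>p\<in>U. pd bs g differentiable at p"
    proof (cases bs rule: rev_exhaust)
      case Nil thus ?thesis using A by simp
    next
      case (snoc bs' b)
      thus ?thesis using A L unfolding smoothn_def by (simp add: pd_append)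
    qed
  qed
qed

lemma smoothn_mono: "smoothn (Suc n) U g \<Longrightarrow> smoothn n U g"
  unfolding smoothn_def by auto

lemma smoothn_mono': "m \<le> n \<Longrightarrow> smoothn n U g \<Longrightarrow> smoothn m U g"
  unfolding smoothn_def by auto

lemma smoothn_0_diff: "smoothn n U g \<Longrightarrow> p \<in> U \<Longrightarrow> g differentiable (at p)"
  unfolding smoothn_def by (metis le0 list.size(3) pd.simps(1))

lemma smoothn_local:
  assumes "open U" "\<forall>q\<in>U. g q = g' q" "smoothn n U g"
  shows "smoothn n U g'"
  unfolding smoothn_def
proof (intro allI impI ballI)
  fix bs :: "bool list" and p assume "length bs \<le> n" "p \<in> U"
  thus "pd bs g' differentiable at p"
    using assms pd_local[OF assms(1,2), of bs] differentiable_local[OF assms(1)]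
    unfolding smoothn_def by metis
qed

lemma smoothn_Db: "smoothn (Suc n) U g \<Longrightarrow> smoothn n U (Db b g)"
  using smoothn_Suc by blast

lemma smooth_on_Db: "smooth_on U g \<Longrightarrow> smooth_on U (Db b g)"
  unfolding smooth_on_n using smoothn_Db by blast

lemma smooth_on_dx: "smooth_on U g \<Longrightarrow> smooth_on U (dx g)"
  using smooth_on_Db[of U g True] by (simp add: Db_def)
lemma smooth_on_dy: "smooth_on U g \<Longrightarrow> smooth_on U (dy g)"
  using smooth_on_Db[of U g False] by (simp add: Db_def)

lemma Db_add: "g differentiable (at p) \<Longrightarrow> h differentiable (at p) \<Longrightarrow>
   Db b (\<lambda>q. g q + h q) p = Db b g p + Db b h p"
proof -
  assume g: "g differentiable (at p)" and h: "h differentiable (at p)"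
  have "((\<lambda>q. g q + h q) has_derivative (\<lambda>v. frechet_derivative g (at p) v + frechet_derivative h (at p) v)) (at p)"
    using has_derivative_add[OF frechet_derivative_works[THEN iffD1, OF g] frechet_derivative_works[THEN iffD1, OF h]] .
  from Db_has[OF this] show ?thesis by (simp add: Db_eq)
qed

lemma Db_linear: "bounded_linear L \<Longrightarrow> g differentiable (at p) \<Longrightarrow>
   Db b (\<lambda>q. L (g q)) p = L (Db b g p)"
proof -
  assume L: "bounded_linear L" and g: "g differentiable (at p)"
  have "((\<lambda>q. L (g q)) has_derivative (\<lambda>v. L (frechet_derivative g (at p) v))) (at p)"
    using bounded_linear.has_derivative[OF L frechet_derivative_works[THEN iffD1, OF g]] .
  from Db_has[OF this] show ?thesis by (simp add: Db_eq)
qed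

lemma Db_bilinear: "bounded_bilinear pr \<Longrightarrow> g differentiable (at p) \<Longrightarrow> h differentiable (at p) \<Longrightarrow>
   Db b (\<lambda>q. pr (g q) (h q)) p = pr (g p) (Db b h p) + pr (Db b g p) (h p)"
proof -
  assume P: "bounded_bilinear pr" and g: "g differentiable (at p)" and h: "h differentiable (at p)"
  have "((\<lambda>q. pr (g q) (h q)) has_derivative
     (\<lambda>v. pr (g p) (frechet_derivative h (at p) v) + pr (frechet_derivative g (at p) v) (h p))) (at p)"
    using bounded_bilinear.FDERIV[OF P frechet_derivative_works[THEN iffD1, OF g]
        frechet_derivative_works[THEN iffD1, OF h]] .
  from Db_has[OF this] show ?thesis by (simp add: Db_eq)
qed

lemma Db_const: "Db b (\<lambda>q. c::'a::real_normed_vector) p = 0"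
  by (simp add: Db_eq)

lemma diff_bilinear: "bounded_bilinear pr \<Longrightarrow> g differentiable (at p) \<Longrightarrow> h differentiable (at p) \<Longrightarrow>
  (\<lambda>q. pr (g q) (h q)) differentiable (at p)"
  unfolding differentiable_def using bounded_bilinear.FDERIV by blast



lemma diff_add: "g differentiable (at p) \<Longrightarrow> h differentiable (at p) \<Longrightarrow>
  (\<lambda>q. g q + h q) differentiable (at p)"
  by (rule differentiable_add)

lemma diff_linear: "bounded_linear L \<Longrightarrow> g differentiable (at p) \<Longrightarrow>
  (\<lambda>q. L (g q)) differentiable (at p)"
  unfolding differentiable_def using bounded_linear.has_derivative by blast

lemma smoothn_add:
  assumes "open U"
  shows "smoothn n U g \<Longrightarrow> smoothn n U h \<Longrightarrow> smoothn n U (\<lambda>q. g q + h q)"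
proof (induction n arbitrary: g h)
  case 0 thus ?case unfolding smoothn_def by (simp add: differentiable_add)
next
  case (Suc n)
  have d: "\<forall>p\<in>U. g differentiable (at p)" "\<forall>p\<in>U. h differentiable (at p)"
    using Suc.prems unfolding smoothn_Suc by blast+
  show ?case unfolding smoothn_Suc
  proof (intro conjI allI ballI)
    fix p assume "p \<in> U" thus "(\<lambda>q. g q + h q) differentiable (at p)" using d by (intro differentiable_add) auto
  next
    fix b
    have "smoothn n U (\<lambda>q. Db b g q + Db b h q)"
      using Suc.IH[OF smoothn_Db[OF Suc.prems(1)] smoothn_Db[OF Suc.prems(2)]] .
    moreover have "\<forall>q\<in>U. Db b g q + Db b h q = Db b (\<lambda>q. g q + h q) q"
      using d by (simp add: Db_add)
    ultimately show "smoothn n U (Db b (\<lambda>q. g q + h q))" by (rule smoothn_local[OF assms, rotated])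
  qed
qed

lemma smoothn_linear:
  assumes "open U" "bounded_linear L"
  shows "smoothn n U g \<Longrightarrow> smoothn n U (\<lambda>q. L (g q))"
proof (induction n arbitrary: g)
  case 0 thus ?case unfolding smoothn_def by (simp, blast intro: diff_linear[OF assms(2)])
next
  case (Suc n)
  have d: "\<forall>p\<in>U. g differentiable (at p)"
    using Suc.prems unfolding smoothn_Suc by blast+
  show ?case unfolding smoothn_Suc
  proof (intro conjI allI ballI)
    fix p assume "p \<in> U" thus "(\<lambda>q. L (g q)) differentiable (at p)" using d by (blast intro: diff_linear[OF assms(2)])
  next
    fix b
    have "smoothn n U (\<lambda>q. L (Db b g q))"
      using Suc.IH[OF smoothn_Db[OF Suc.prems(1)]] .
    moreover have "\<forall>q\<in>U. L (Db b g q) = Db b (\<lambda>q. L (g q)) q"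
      using d by (simp add: Db_linear[OF assms(2)])
    ultimately show "smoothn n U (Db b (\<lambda>q. L (g q)))" by (rule smoothn_local[OF assms(1), rotated])
  qed
qed

lemma smoothn_bilinear:
  assumes "open U" "bounded_bilinear pr"
  shows "smoothn n U g \<Longrightarrow> smoothn n U h \<Longrightarrow> smoothn n U (\<lambda>q. pr (g q) (h q))"
proof (induction n arbitrary: g h)
  case 0 thus ?case unfolding smoothn_def by (simp, blast intro: diff_bilinear[OF assms(2)])
next
  case (Suc n)
  have d: "\<forall>p\<in>U. g differentiable (at p)" "\<forall>p\<in>U. h differentiable (at p)"
    using Suc.prems unfolding smoothn_Suc by blast+
  show ?case unfolding smoothn_Suc
  proof (intro conjI allI ballI)
    fix p assume "p \<in> U" thus "(\<lambda>q. pr (g q) (h q)) differentiable (at p)"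
      using d by (blast intro: diff_bilinear[OF assms(2)])
  next
    fix b
    have s1: "smoothn n U (\<lambda>q. pr (g q) (Db b h q))"
      using Suc.IH[OF smoothn_mono[OF Suc.prems(1)] smoothn_Db[OF Suc.prems(2)]] .
    have s2: "smoothn n U (\<lambda>q. pr (Db b g q) (h q))"
      using Suc.IH[OF smoothn_Db[OF Suc.prems(1)] smoothn_mono[OF Suc.prems(2)]] .
    have "smoothn n U (\<lambda>q. pr (g q) (Db b h q) + pr (Db b g q) (h q))"
      using smoothn_add[OF assms(1) s1 s2] .
    moreover have "\<forall>q\<in>U. pr (g q) (Db b h q) + pr (Db b g q) (h q) = Db b (\<lambda>q. pr (g q) (h q)) q"
      using d Db_bilinear[OF assms(2)] by auto
    ultimately show "smoothn n U (Db b (\<lambda>q. pr (g q) (h q)))" by (rule smoothn_local[OF assms(1), rotated])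
  qed
qed

lemma smoothn_const: "smoothn n U (\<lambda>q. c)"
proof (induction n arbitrary: c)
  case 0 thus ?case unfolding smoothn_def by simp
next
  case (Suc n)
  have "Db b (\<lambda>q. c) = (\<lambda>q. 0)" for b by (rule ext) (simp add: Db_const)
  thus ?case unfolding smoothn_Suc using Suc.IH by simp
qed

lemma Db_powr:
  fixes \<rho> :: "complex \<Rightarrow> real"
  assumes "\<rho> differentiable (at p)" "\<rho> p > 0"
  shows "Db b (\<lambda>q. \<rho> q powr r) p = Db b \<rho> p * (r * \<rho> p powr (r - 1))"
    and "(\<lambda>q. \<rho> q powr r) differentiable (at p)"
proof -
  have "((\<lambda>q. \<rho> q powr r) has_derivative (\<lambda>v. frechet_derivative \<rho> (at p) v * (r * \<rho> p powr (r - 1)))) (at p)"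
    using DERIV_compose_FDERIV[OF has_real_derivative_powr[OF assms(2)] frechet_derivative_works[THEN iffD1, OF assms(1)]] .
  from Db_has[OF this] show "Db b (\<lambda>q. \<rho> q powr r) p = Db b \<rho> p * (r * \<rho> p powr (r - 1))" by (simp add: Db_eq)
  show "(\<lambda>q. \<rho> q powr r) differentiable (at p)" using \<open>(_ has_derivative _) _\<close> unfolding differentiable_def by blast
qed

lemma smoothn_powr:
  fixes \<rho> :: "complex \<Rightarrow> real"
  assumes "open U" "\<forall>p\<in>U. \<rho> p > 0"
  shows "smoothn n U \<rho> \<Longrightarrow> smoothn n U (\<lambda>q. \<rho> q powr r)"
proof (induction n arbitrary: r)
  case 0 thus ?case unfolding smoothn_def using assms(2) by (simp, blast intro: Db_powr(2))
next
  case (Suc n)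
  have d: "\<forall>p\<in>U. \<rho> differentiable (at p)"
    using Suc.prems unfolding smoothn_Suc by blast+
  show ?case unfolding smoothn_Suc
  proof (intro conjI allI ballI)
    fix p assume "p \<in> U" thus "(\<lambda>q. \<rho> q powr r) differentiable (at p)"
      using d assms(2) by (blast intro: Db_powr(2))
  next
    fix b
    have s1: "smoothn n U (\<lambda>q. \<rho> q powr (r - 1))" using Suc.IH[OF smoothn_mono[OF Suc.prems]] .
    have s2: "smoothn n U (\<lambda>q. r * \<rho> q powr (r - 1))"
      using smoothn_bilinear[OF assms(1) bounded_bilinear_mult smoothn_const s1] .
    have "smoothn n U (\<lambda>q. Db b \<rho> q * (r * \<rho> q powr (r - 1)))"
      using smoothn_bilinear[OF assms(1) bounded_bilinear_mult smoothn_Db[OF Suc.prems] s2] .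
    moreover have "\<forall>q\<in>U. Db b \<rho> q * (r * \<rho> q powr (r - 1)) = Db b (\<lambda>q. \<rho> q powr r) q"
      using d Db_powr(1) assms(2) by simp
    ultimately show "smoothn n U (Db b (\<lambda>q. \<rho> q powr r))" by (rule smoothn_local[OF assms(1), rotated])
  qed
qed

lemma smooth_on_add: assumes "open U" "smooth_on U g" "smooth_on U h" shows "smooth_on U (\<lambda>q. g q + h q)"
  using assms(2,3) unfolding smooth_on_n by (simp add: smoothn_add[OF assms(1)])
lemma smooth_on_linear: assumes "open U" "bounded_linear L" "smooth_on U g" shows "smooth_on U (\<lambda>q. L (g q))"
  using assms(3) unfolding smooth_on_n by (simp add: smoothn_linear[OF assms(1,2)])
lemma smooth_on_bilinear: assumes "open U" "bounded_bilinear pr" "smooth_on U g" "smooth_on U h"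
  shows "smooth_on U (\<lambda>q. pr (g q) (h q))"
  using assms(3,4) unfolding smooth_on_n by (simp add: smoothn_bilinear[OF assms(1,2)])
lemma smooth_on_const: "smooth_on U (\<lambda>q. c)"
  unfolding smooth_on_n by (simp add: smoothn_const)
lemma smooth_on_powr: fixes \<rho> :: "complex \<Rightarrow> real" assumes "open U" "\<forall>p\<in>U. \<rho> p > 0" "smooth_on U \<rho>" shows "smooth_on U (\<lambda>q. \<rho> q powr r)"
  using assms(3) unfolding smooth_on_n by (simp add: smoothn_powr[OF assms(1,2)])
lemma smooth_on_local: assumes "open U" "\<forall>q\<in>U. g q = g' q" "smooth_on U g" shows "smooth_on U g'"
  using assms(3) unfolding smooth_on_n using smoothn_local[OF assms(1,2)] by simp
lemma smooth_on_diff: "smooth_on U g \<Longrightarrow> p \<in> U \<Longrightarrow> g differentiable (at p)"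
  unfolding smooth_on_n using smoothn_0_diff by blast



lemma line_deriv:
  fixes G :: "complex \<Rightarrow> real"
  assumes "G differentiable (at (c + of_real s * v))"
  shows "((\<lambda>s. G (c + of_real s * v)) has_real_derivative frechet_derivative G (at (c + of_real s * v)) v) (at s)"
proof -
  let ?G' = "frechet_derivative G (at (c + of_real s * v))"
  have l: "((\<lambda>s. c + of_real s * v) has_derivative (\<lambda>t. of_real t * v)) (at s)"
    by (intro derivative_eq_intros) auto
  have "((G \<circ> (\<lambda>s. c + of_real s * v)) has_derivative (?G' \<circ> (\<lambda>t. of_real t * v))) (at s)"
    by (rule diff_chain_at[OF l]) (use assms frechet_derivative_works in blast)
  moreover have "?G' \<circ> (\<lambda>t. of_real t * v) = (\<lambda>t. ?G' v * t)"
  proof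
    fix t
    have "linear ?G'" using linear_frechet_derivative assms by blast
    hence "?G' (t *\<^sub>R v) = t *\<^sub>R ?G' v" by (simp add: linear_scale)
    thus "(?G' \<circ> (\<lambda>t. of_real t * v)) t = ?G' v * t" by (simp add: scaleR_conv_of_real)
  qed
  ultimately show ?thesis unfolding has_field_derivative_def comp_def by simp
qed

lemma mvt_gen:
  fixes \<phi> :: "real \<Rightarrow> real"
  assumes "h > 0" "\<And>s. 0 \<le> s \<Longrightarrow> s \<le> h \<Longrightarrow> (\<phi> has_real_derivative \<phi>' s) (at s)"
  shows "\<exists>s. 0 < s \<and> s < h \<and> \<phi> h - \<phi> 0 = h * \<phi>' s"
proof -
  have "continuous_on {0..h} \<phi>"
  proof (rule continuous_at_imp_continuous_on, rule ballI)
    fix x assume "x \<in> {0..h}" thus "isCont \<phi> x" by (intro DERIV_isCont[OF assms(2)]) auto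
  qed
  moreover have "\<And>x. 0 < x \<Longrightarrow> x < h \<Longrightarrow> \<phi> differentiable (at x)"
    using assms(2) real_differentiable_def by (metis less_eq_real_def)
  ultimately obtain l z where z: "0 < z" "z < h" "DERIV \<phi> z :> l" "\<phi> h - \<phi> 0 = (h - 0) * l"
    using MVT[OF assms(1)] by blast
  have "l = \<phi>' z" using DERIV_unique[OF z(3) assms(2)] z by simp
  thus ?thesis using z by auto
qed

definition P2 :: "complex \<Rightarrow> real \<Rightarrow> real \<Rightarrow> complex" where "P2 p a b = p + of_real a + \<i> * of_real b"

lemma step_x:
  fixes G :: "complex \<Rightarrow> real"
  assumes "h > 0" "\<And>s t. 0 \<le> s \<Longrightarrow> s \<le> h \<Longrightarrow> 0 \<le> t \<Longrightarrow> t \<le> h \<Longrightarrow> G differentiable (at (P2 p s t))"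
    "0 \<le> t0" "t0 \<le> h" "0 \<le> t1" "t1 \<le> h"
  shows "\<exists>s. 0 < s \<and> s < h \<and> (G (P2 p h t1) - G (P2 p h t0)) - (G (P2 p 0 t1) - G (P2 p 0 t0))
      = h * (frechet_derivative G (at (P2 p s t1)) 1 - frechet_derivative G (at (P2 p s t0)) 1)"
proof -
  have e: "\<And>s t. P2 p s t = (p + \<i> * of_real t) + of_real s * 1" by (simp add: P2_def algebra_simps)
  have "\<exists>s. 0 < s \<and> s < h \<and> (\<lambda>s. G (P2 p s t1) - G (P2 p s t0)) h - (\<lambda>s. G (P2 p s t1) - G (P2 p s t0)) 0
      = h * (frechet_derivative G (at (P2 p s t1)) 1 - frechet_derivative G (at (P2 p s t0)) 1)"
  proof (rule mvt_gen[OF assms(1)])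
    fix s assume s: "0 \<le> s" "s \<le> h"
    show "((\<lambda>s. G (P2 p s t1) - G (P2 p s t0)) has_real_derivative
       (frechet_derivative G (at (P2 p s t1)) 1 - frechet_derivative G (at (P2 p s t0)) 1)) (at s)"
      unfolding e
      by (intro DERIV_diff line_deriv) (use assms s e in auto)
  qed
  thus ?thesis by simp
qed

lemma step_y:
  fixes G :: "complex \<Rightarrow> real"
  assumes "h > 0" "\<And>s t. 0 \<le> s \<Longrightarrow> s \<le> h \<Longrightarrow> 0 \<le> t \<Longrightarrow> t \<le> h \<Longrightarrow> G differentiable (at (P2 p s t))"
    "0 \<le> s0" "s0 \<le> h" "0 \<le> s1" "s1 \<le> h"
  shows "\<exists>t. 0 < t \<and> t < h \<and> (G (P2 p s1 h) - G (P2 p s0 h)) - (G (P2 p s1 0) - G (P2 p s0 0))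
      = h * (frechet_derivative G (at (P2 p s1 t)) \<i> - frechet_derivative G (at (P2 p s0 t)) \<i>)"
proof -
  have e: "\<And>s t. P2 p s t = (p + of_real s) + of_real t * \<i>" by (simp add: P2_def algebra_simps)
  have "\<exists>t. 0 < t \<and> t < h \<and> (\<lambda>t. G (P2 p s1 t) - G (P2 p s0 t)) h - (\<lambda>t. G (P2 p s1 t) - G (P2 p s0 t)) 0
      = h * (frechet_derivative G (at (P2 p s1 t)) \<i> - frechet_derivative G (at (P2 p s0 t)) \<i>)"
  proof (rule mvt_gen[OF assms(1)])
    fix t assume t: "0 \<le> t" "t \<le> h"
    show "((\<lambda>t. G (P2 p s1 t) - G (P2 p s0 t)) has_real_derivative
       (frechet_derivative G (at (P2 p s1 t)) \<i> - frechet_derivative G (at (P2 p s0 t)) \<i>)) (at t)"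
      unfolding e
      by (intro DERIV_diff line_deriv) (use assms t e in auto)
  qed
  thus ?thesis by simp
qed

lemma step_x1:
  fixes G :: "complex \<Rightarrow> real"
  assumes "h > 0" "\<And>s. 0 \<le> s \<Longrightarrow> s \<le> h \<Longrightarrow> G differentiable (at (P2 p s t))"
  shows "\<exists>s. 0 < s \<and> s < h \<and> G (P2 p h t) - G (P2 p 0 t) = h * frechet_derivative G (at (P2 p s t)) 1"
proof -
  have e: "\<And>s. P2 p s t = (p + \<i> * of_real t) + of_real s * 1" by (simp add: P2_def algebra_simps)
  have "\<exists>s. 0 < s \<and> s < h \<and> (\<lambda>s. G (P2 p s t)) h - (\<lambda>s. G (P2 p s t)) 0
      = h * frechet_derivative G (at (P2 p s t)) 1"
  proof (rule mvt_gen[OF assms(1)])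
    fix s assume s: "0 \<le> s" "s \<le> h"
    show "((\<lambda>s. G (P2 p s t)) has_real_derivative frechet_derivative G (at (P2 p s t)) 1) (at s)"
      unfolding e by (intro line_deriv) (use assms s e in auto)
  qed
  thus ?thesis by simp
qed

lemma step_y1:
  fixes G :: "complex \<Rightarrow> real"
  assumes "h > 0" "\<And>t. 0 \<le> t \<Longrightarrow> t \<le> h \<Longrightarrow> G differentiable (at (P2 p s t))"
  shows "\<exists>t. 0 < t \<and> t < h \<and> G (P2 p s h) - G (P2 p s 0) = h * frechet_derivative G (at (P2 p s t)) \<i>"
proof -
  have e: "\<And>t. P2 p s t = (p + of_real s) + of_real t * \<i>" by (simp add: P2_def algebra_simps)
  have "\<exists>t. 0 < t \<and> t < h \<and> (\<lambda>t. G (P2 p s t)) h - (\<lambda>t. G (P2 p s t)) 0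
      = h * frechet_derivative G (at (P2 p s t)) \<i>"
  proof (rule mvt_gen[OF assms(1)])
    fix t assume t: "0 \<le> t" "t \<le> h"
    show "((\<lambda>t. G (P2 p s t)) has_real_derivative frechet_derivative G (at (P2 p s t)) \<i>) (at t)"
      unfolding e by (intro line_deriv) (use assms t e in auto)
  qed
  thus ?thesis by simp
qed

lemma mixed_real:
  fixes G :: "complex \<Rightarrow> real"
  assumes U: "open U" "p \<in> U" and S: "smoothn 2 U G"
  shows "Db False (Db True G) p = Db True (Db False G) p"
proof (rule ccontr)
  let ?F1 = "Db False (Db True G)" and ?F2 = "Db True (Db False G)"
  let ?d1 = "?F1 p" and ?d2 = "?F2 p"
  assume ne: "?d1 \<noteq> ?d2"
  define e where "e = \<bar>?d1 - ?d2\<bar> / 2"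
  have e: "e > 0" using ne by (simp add: e_def)
  have S1: "smoothn 1 U (Db b G)" for b using S smoothn_Db[of 1 U G b] by (simp add: numeral_2_eq_2)
  have S0: "smoothn 0 U (Db b' (Db b G))" for b b' using smoothn_Db[OF S1[of b, unfolded One_nat_def]] .
  have dG: "\<And>q. q \<in> U \<Longrightarrow> G differentiable (at q)" using S smoothn_0_diff by blast
  have dG1: "\<And>q b. q \<in> U \<Longrightarrow> Db b G differentiable (at q)" using S1 smoothn_0_diff by blast
  have dG2: "\<And>q b b'. q \<in> U \<Longrightarrow> Db b' (Db b G) differentiable (at q)" using S0 smoothn_0_diff by blast
  have c1: "isCont ?F1 p" using dG2[OF U(2)] differentiable_imp_continuous_within by blast
  have c2: "isCont ?F2 p" using dG2[OF U(2)] differentiable_imp_continuous_within by blast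
  obtain r1 where r1: "r1 > 0" "\<And>q. dist q p < r1 \<Longrightarrow> dist (?F1 q) ?d1 < e"
    using c1 e unfolding continuous_at_eps_delta by blast
  obtain r2 where r2: "r2 > 0" "\<And>q. dist q p < r2 \<Longrightarrow> dist (?F2 q) ?d2 < e"
    using c2 e unfolding continuous_at_eps_delta by blast
  obtain r0 where r0: "r0 > 0" "ball p r0 \<subseteq> U" using U openE by blast
  define h where "h = min r0 (min r1 r2) / 4"
  have h: "h > 0" using r0 r1 r2 by (simp add: h_def)
  have inU: "dist (P2 p s t) p < min r0 (min r1 r2)" if st: "0 \<le> s" "s \<le> h" "0 \<le> t" "t \<le> h" for s t
  proof -
    have "dist (P2 p s t) p = cmod (of_real s + \<i> * of_real t)"
      by (simp add: dist_norm P2_def)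
    also have "\<dots> \<le> cmod (of_real s) + cmod (\<i> * of_real t)" by (rule norm_triangle_ineq)
    also have "\<dots> = s + t" using st by (simp add: norm_mult)
    also have "\<dots> < min r0 (min r1 r2)" using st h h_def by linarith
    finally show ?thesis .
  qed
  have inU': "P2 p s t \<in> U" if "0 \<le> s" "s \<le> h" "0 \<le> t" "t \<le> h" for s t
  proof -
    have "dist p (P2 p s t) < r0" using inU[OF that] by (simp add: dist_commute)
    thus ?thesis using r0(2) by auto
  qed
  have F1n: "dist (?F1 (P2 p s t)) ?d1 < e" if "0 \<le> s" "s \<le> h" "0 \<le> t" "t \<le> h" for s t
    using r1(2) inU[OF that] by simp
  have F2n: "dist (?F2 (P2 p s t)) ?d2 < e" if "0 \<le> s" "s \<le> h" "0 \<le> t" "t \<le> h" for s t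
    using r2(2) inU[OF that] by simp
  have Gx: "\<And>q. frechet_derivative G (at q) 1 = Db True G q" by (simp add: Db_eq dir_def)
  have Gy: "\<And>q. frechet_derivative G (at q) \<i> = Db False G q" by (simp add: Db_eq dir_def)
  have Gxy: "\<And>q. frechet_derivative (Db True G) (at q) \<i> = ?F1 q" by (simp add: Db_eq dir_def)
  have Gyx: "\<And>q. frechet_derivative (Db False G) (at q) 1 = ?F2 q" by (simp add: Db_eq dir_def)
  define \<Delta> where "\<Delta> = (G (P2 p h h) - G (P2 p h 0)) - (G (P2 p 0 h) - G (P2 p 0 0))"
  obtain s1 where s1: "0 < s1" "s1 < h" "\<Delta> = h * (Db True G (P2 p s1 h) - Db True G (P2 p s1 0))"
    using step_x[OF h, of G p 0 h] dG inU' h unfolding \<Delta>_def Gx by force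
  obtain t1 where t1: "0 < t1" "t1 < h" "Db True G (P2 p s1 h) - Db True G (P2 p s1 0) = h * ?F1 (P2 p s1 t1)"
    using step_y1[OF h, of "Db True G" p s1] dG1 inU' s1 unfolding Gxy by force
  obtain t2 where t2: "0 < t2" "t2 < h" "\<Delta> = h * (Db False G (P2 p h t2) - Db False G (P2 p 0 t2))"
    using step_y[OF h, of G p 0 h] dG inU' h unfolding \<Delta>_def Gy by force
  obtain s2 where s2: "0 < s2" "s2 < h" "Db False G (P2 p h t2) - Db False G (P2 p 0 t2) = h * ?F2 (P2 p s2 t2)"
    using step_x1[OF h, of "Db False G" p t2] dG1 inU' t2 unfolding Gyx by force
  have "h * (h * ?F1 (P2 p s1 t1)) = h * (h * ?F2 (P2 p s2 t2))" using s1 t1 t2 s2 by simp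
  hence eq: "?F1 (P2 p s1 t1) = ?F2 (P2 p s2 t2)" using h by simp
  have a: "dist (?F1 (P2 p s1 t1)) ?d1 < e" using F1n s1 t1 by simp
  have b: "dist (?F2 (P2 p s2 t2)) ?d2 < e" using F2n s2 t2 by simp
  have "\<bar>?d1 - ?d2\<bar> < 2 * e" using a b eq unfolding dist_real_def by linarith
  thus False unfolding e_def by simp
qed

lemma mixed_L:
  fixes g :: "complex \<Rightarrow> 'a::real_normed_vector" and L :: "'a \<Rightarrow> real"
  assumes U: "open U" "p \<in> U" and S: "smoothn 2 U g" and L: "bounded_linear L"
  shows "L (Db False (Db True g) p) = L (Db True (Db False g) p)"
proof -
  have S1: "smoothn 1 U (Db b g)" for b using S smoothn_Db[of 1 U g b] by (simp add: numeral_2_eq_2)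
  have dg: "\<And>q. q \<in> U \<Longrightarrow> g differentiable (at q)" using S smoothn_0_diff by blast
  have dg1: "\<And>q b. q \<in> U \<Longrightarrow> Db b g differentiable (at q)" using S1 smoothn_0_diff by blast
  have SG: "smoothn 2 U (\<lambda>q. L (g q))" using smoothn_linear[OF U(1) L S] .
  have e1: "\<forall>q\<in>U. Db b (\<lambda>q. L (g q)) q = L (Db b g q)" for b
    using dg Db_linear[OF L] by simp
  have e2: "Db b' (Db b (\<lambda>q. L (g q))) p = L (Db b' (Db b g) p)" for b b'
  proof -
    have "Db b' (Db b (\<lambda>q. L (g q))) p = Db b' (\<lambda>q. L (Db b g q)) p"
      using Db_local[OF U e1] .
    also have "\<dots> = L (Db b' (Db b g) p)" using Db_linear[OF L dg1[OF U(2)]] .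
    finally show ?thesis .
  qed
  show ?thesis using mixed_real[OF U SG] e2 by simp
qed

definition cnjv :: "cvec \<Rightarrow> cvec" where "cnjv v = (\<chi> i. cnj (v$i))"

lemma bounded_linear_Re_nth: "bounded_linear (\<lambda>v::cvec. Re (v $ j))"
  by (rule bounded_linear_compose[OF bounded_linear_Re bounded_linear_vec_nth])
lemma bounded_linear_Im_nth: "bounded_linear (\<lambda>v::cvec. Im (v $ j))"
  by (rule bounded_linear_compose[OF bounded_linear_Im bounded_linear_vec_nth])

lemma mixed_vec:
  fixes g :: "complex \<Rightarrow> cvec"
  assumes U: "open U" "p \<in> U" and S: "smoothn 2 U g"
  shows "Db False (Db True g) p = Db True (Db False g) p"
proof -
  have "Re (Db False (Db True g) p $ j) = Re (Db True (Db False g) p $ j)" for j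
    using mixed_L[OF U S bounded_linear_Re_nth] .
  moreover have "Im (Db False (Db True g) p $ j) = Im (Db True (Db False g) p $ j)" for j
    using mixed_L[OF U S bounded_linear_Im_nth] .
  ultimately show ?thesis by (simp add: vec_eq_iff complex_eq_iff)
qed



lemma lor_add1[simp]: "lor (x + y) z = lor x z + lor y z" by (simp add: lor_def algebra_simps)
lemma lor_add2[simp]: "lor z (x + y) = lor z x + lor z y" by (simp add: lor_def algebra_simps)
lemma lor_diff1[simp]: "lor (x - y) z = lor x z - lor y z" by (simp add: lor_def algebra_simps)
lemma lor_diff2[simp]: "lor z (x - y) = lor z x - lor z y" by (simp add: lor_def algebra_simps)
lemma lor_neg1[simp]: "lor (- x) z = - lor x z" by (simp add: lor_def algebra_simps)
lemma lor_neg2[simp]: "lor z (- x) = - lor z x" by (simp add: lor_def algebra_simps)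
lemma lor_smult1[simp]: "lor (c *s x) z = c * lor x z" by (simp add: lor_def algebra_simps)
lemma lor_smult2[simp]: "lor z (c *s x) = c * lor z x" by (simp add: lor_def algebra_simps)
lemma lor_zero1[simp]: "lor 0 z = 0" by (simp add: lor_def)
lemma lor_zero2[simp]: "lor z 0 = 0" by (simp add: lor_def)
lemma lor_sym: "lor x y = lor y x" by (simp add: lor_def algebra_simps)
lemma lor_scaleR1: "lor (r *\<^sub>R x) z = r *\<^sub>R lor x z"
  unfolding lor_def vector_scaleR_component by (simp add: scaleR_conv_of_real algebra_simps)
lemma lor_scaleR2: "lor z (r *\<^sub>R x) = r *\<^sub>R lor z x"
  unfolding lor_def vector_scaleR_component by (simp add: scaleR_conv_of_real algebra_simps)


lemma norm5: "norm (u1+u2+u3+u4-u5::complex) \<le> norm u1+norm u2+norm u3+norm u4+norm u5"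
  using norm_triangle_ineq[of u1 u2] norm_triangle_ineq[of "u1+u2" u3] norm_triangle_ineq[of "u1+u2+u3" u4]
    norm_triangle_ineq4[of "u1+u2+u3+u4" u5] by linarith

lemma norm_prod_nth: "norm ((a::cvec)$i * b$i) \<le> norm a * norm b"
proof -
  have "norm (a$i) \<le> norm a" "norm (b$i) \<le> norm b" unfolding norm_vec_def by (rule member_le_L2_set, simp_all)+
  thus ?thesis unfolding norm_mult by (simp add: mult_mono)
qed

lemma bounded_bilinear_lor: "bounded_bilinear lor"
proof (rule bounded_bilinear.intro)
  show "\<exists>K. \<forall>a b. norm (lor a b) \<le> norm a * norm b * K"
  proof (intro exI allI)
    fix a b :: cvec
    have "norm (lor a b) \<le> norm (a$0*b$0) + norm (a$1*b$1) + norm (a$2*b$2) + norm (a$3*b$3) + norm (a$4*b$4)"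
      unfolding lor_def by (rule norm5)
    also have "\<dots> \<le> norm a * norm b * 5"
      using norm_prod_nth[of a 0 b] norm_prod_nth[of a 1 b] norm_prod_nth[of a 2 b] norm_prod_nth[of a 3 b]
        norm_prod_nth[of a 4 b] by linarith
    finally show "norm (lor a b) \<le> norm a * norm b * 5" .
  qed
qed (simp_all add: lor_scaleR1 lor_scaleR2)

lemma norm_smult_cvec: "norm ((a::complex) *s (b::cvec)) = norm a * norm b"
proof -
  have "norm (a *s b) = L2_set (\<lambda>i. norm a * norm (b$i)) UNIV"
    by (simp add: norm_vec_def norm_mult)
  also have "\<dots> = norm a * norm b" by (simp add: norm_vec_def L2_set_right_distrib)
  finally show ?thesis .
qed

lemma bounded_bilinear_smult: "bounded_bilinear ((*s) :: complex \<Rightarrow> cvec \<Rightarrow> cvec)"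
proof (rule bounded_bilinear.intro)
  show "\<exists>K. \<forall>a b. norm ((a::complex) *s (b::cvec)) \<le> norm a * norm b * K"
    by (rule exI[where x=1]) (simp add: norm_smult_cvec)
  show "(r *\<^sub>R a) *s b = r *\<^sub>R (a *s b)" for r a and b :: cvec
    unfolding vec_eq_iff vector_smult_component vector_scaleR_component by (simp add: scaleR_conv_of_real)
  show "a *s (r *\<^sub>R b) = r *\<^sub>R (a *s b)" for r a and b :: cvec
    unfolding vec_eq_iff vector_smult_component vector_scaleR_component by (simp add: scaleR_conv_of_real)
qed (simp_all add: vector_sadd_rdistrib vector_add_ldistrib)

definition cnjv' :: "cvec \<Rightarrow> cvec" where "cnjv' = cnjv"

lemma cnjv_nth[simp]: "cnjv v $ i = cnj (v $ i)" by (simp add: cnjv_def)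
lemma bounded_linear_cnjv: "bounded_linear cnjv"
proof (rule bounded_linear_intro[where K=1])
  show "cnjv (x + y) = cnjv x + cnjv y" for x y by (simp add: vec_eq_iff)
  show "cnjv (r *\<^sub>R x) = r *\<^sub>R cnjv x" for r x by (simp add: vec_eq_iff)
  show "norm (cnjv x) \<le> norm x * 1" for x by (simp add: norm_vec_def)
qed

lemma cnj_lor: "cnj (lor x y) = lor (cnjv x) (cnjv y)" by (simp add: lor_def)
lemma cnjv_cnjv[simp]: "cnjv (cnjv v) = v" by (simp add: vec_eq_iff)
lemma cnjv_add[simp]: "cnjv (x + y) = cnjv x + cnjv y" by (simp add: vec_eq_iff)
lemma cnjv_diff[simp]: "cnjv (x - y) = cnjv x - cnjv y" by (simp add: vec_eq_iff)
lemma cnjv_neg[simp]: "cnjv (- y) = - cnjv y" by (simp add: vec_eq_iff)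
lemma cnjv_smult[simp]: "cnjv (c *s y) = cnj c *s cnjv y" by (simp add: vec_eq_iff)
lemma cnjv_zero[simp]: "cnjv 0 = 0" by (simp add: vec_eq_iff)
lemma realv_cnjv: "realv v \<longleftrightarrow> cnjv v = v"
  by (simp add: realv_def vec_eq_iff complex_eq_iff)



lemma dx_Db: "dx = Db True" and dy_Db: "dy = Db False" by (simp_all add: Db_def)

lemma dz_Db: "dz g p = (1/2) *s (Db True g p - \<i> *s Db False g p)"
  by (simp add: dz_def dx_Db dy_Db)
lemma dzb_Db: "dzb g p = (1/2) *s (Db True g p + \<i> *s Db False g p)"
  by (simp add: dzb_def dx_Db dy_Db)
lemma dzs_Db: "dzs g p = (Db True g p - \<i> * Db False g p) / 2"
  by (simp add: dzs_def dx_Db dy_Db)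
lemma dzbs_Db: "dzbs g p = (Db True g p + \<i> * Db False g p) / 2"
  by (simp add: dzbs_def dx_Db dy_Db)

lemmas bl_smult_right = bounded_bilinear.bounded_linear_right[OF bounded_bilinear_smult]
lemmas bl_smult_left = bounded_bilinear.bounded_linear_left[OF bounded_bilinear_smult]

lemma dz_local: assumes "open U" "p \<in> U" "\<forall>q\<in>U. g q = g' q" shows "dz g p = dz g' p"
  unfolding dz_Db using Db_local[OF assms] by simp
lemma dzb_local: assumes "open U" "p \<in> U" "\<forall>q\<in>U. g q = g' q" shows "dzb g p = dzb g' p"
  unfolding dzb_Db using Db_local[OF assms] by simp
lemma dzs_local: assumes "open U" "p \<in> U" "\<forall>q\<in>U. g q = g' q" shows "dzs g p = dzs g' p"
  unfolding dzs_Db using Db_local[OF assms] by simp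
lemma dzbs_local: assumes "open U" "p \<in> U" "\<forall>q\<in>U. g q = g' q" shows "dzbs g p = dzbs g' p"
  unfolding dzbs_Db using Db_local[OF assms] by simp

lemma dz_const[simp]: "dz (\<lambda>q. c) p = 0" by (simp add: dz_Db Db_const)
lemma dzb_const[simp]: "dzb (\<lambda>q. c) p = 0" by (simp add: dzb_Db Db_const)
lemma dzs_const[simp]: "dzs (\<lambda>q. c) p = 0" by (simp add: dzs_Db Db_const)
lemma dzbs_const[simp]: "dzbs (\<lambda>q. c) p = 0" by (simp add: dzbs_Db Db_const)

lemma dz_zero: "open U \<Longrightarrow> p \<in> U \<Longrightarrow> \<forall>q\<in>U. g q = c \<Longrightarrow> dz g p = 0"
  using dz_local[of U p g "\<lambda>q. c"] by simp
lemma dzb_zero: "open U \<Longrightarrow> p \<in> U \<Longrightarrow> \<forall>q\<in>U. g q = c \<Longrightarrow> dzb g p = 0"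
  using dzb_local[of U p g "\<lambda>q. c"] by simp
lemma dzs_zero: "open U \<Longrightarrow> p \<in> U \<Longrightarrow> \<forall>q\<in>U. g q = c \<Longrightarrow> dzs g p = 0"
  using dzs_local[of U p g "\<lambda>q. c"] by simp
lemma dzbs_zero: "open U \<Longrightarrow> p \<in> U \<Longrightarrow> \<forall>q\<in>U. g q = c \<Longrightarrow> dzbs g p = 0"
  using dzbs_local[of U p g "\<lambda>q. c"] by simp

lemma dz_add: "g differentiable (at p) \<Longrightarrow> h differentiable (at p) \<Longrightarrow>
  dz (\<lambda>q. g q + h q) p = dz g p + dz h p"
  unfolding dz_Db by (simp add: Db_add vec_eq_iff algebra_simps)
lemma dzb_add: "g differentiable (at p) \<Longrightarrow> h differentiable (at p) \<Longrightarrow>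
  dzb (\<lambda>q. g q + h q) p = dzb g p + dzb h p"
  unfolding dzb_Db by (simp add: Db_add vec_eq_iff algebra_simps)
lemma dzs_add: "g differentiable (at p) \<Longrightarrow> h differentiable (at p) \<Longrightarrow>
  dzs (\<lambda>q. g q + h q) p = dzs g p + dzs h p"
  unfolding dzs_Db by (simp add: Db_add field_simps)
lemma dzbs_add: "g differentiable (at p) \<Longrightarrow> h differentiable (at p) \<Longrightarrow>
  dzbs (\<lambda>q. g q + h q) p = dzbs g p + dzbs h p"
  unfolding dzbs_Db by (simp add: Db_add field_simps)

lemma dz_smult: "c differentiable (at p) \<Longrightarrow> g differentiable (at p) \<Longrightarrow>
  dz (\<lambda>q. c q *s g q) p = c p *s dz g p + dzs c p *s g p"
  unfolding dz_Db dzs_Db by (simp add: Db_bilinear[OF bounded_bilinear_smult] vec_eq_iff field_simps)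
lemma dzb_smult: "c differentiable (at p) \<Longrightarrow> g differentiable (at p) \<Longrightarrow>
  dzb (\<lambda>q. c q *s g q) p = c p *s dzb g p + dzbs c p *s g p"
  unfolding dzb_Db dzbs_Db by (simp add: Db_bilinear[OF bounded_bilinear_smult] vec_eq_iff field_simps)
lemma dzs_lor: "g differentiable (at p) \<Longrightarrow> h differentiable (at p) \<Longrightarrow>
  dzs (\<lambda>q. lor (g q) (h q)) p = lor (dz g p) (h p) + lor (g p) (dz h p)"
  unfolding dz_Db dzs_Db by (simp add: Db_bilinear[OF bounded_bilinear_lor] field_simps)
lemma dzbs_lor: "g differentiable (at p) \<Longrightarrow> h differentiable (at p) \<Longrightarrow>
  dzbs (\<lambda>q. lor (g q) (h q)) p = lor (dzb g p) (h p) + lor (g p) (dzb h p)"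
  unfolding dzb_Db dzbs_Db by (simp add: Db_bilinear[OF bounded_bilinear_lor] field_simps)
lemma dzs_mult: "a differentiable (at p) \<Longrightarrow> b differentiable (at p) \<Longrightarrow>
  dzs (\<lambda>q. a q * b q) p = dzs a p * b p + a p * dzs b p"
  unfolding dzs_Db by (simp add: Db_bilinear[OF bounded_bilinear_mult] field_simps)
lemma dzbs_mult: "a differentiable (at p) \<Longrightarrow> b differentiable (at p) \<Longrightarrow>
  dzbs (\<lambda>q. a q * b q) p = dzbs a p * b p + a p * dzbs b p"
  unfolding dzbs_Db by (simp add: Db_bilinear[OF bounded_bilinear_mult] field_simps)

lemma dzb_cnjv: "g differentiable (at p) \<Longrightarrow> dzb (\<lambda>q. cnjv (g q)) p = cnjv (dz g p)"
  unfolding dzb_Db dz_Db by (simp add: Db_linear[OF bounded_linear_cnjv] vec_eq_iff)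
lemma dz_cnjv: "g differentiable (at p) \<Longrightarrow> dz (\<lambda>q. cnjv (g q)) p = cnjv (dzb g p)"
  unfolding dzb_Db dz_Db by (simp add: Db_linear[OF bounded_linear_cnjv] vec_eq_iff)

lemma dzb_real: "open U \<Longrightarrow> p \<in> U \<Longrightarrow> \<forall>q\<in>U. realv (g q) \<Longrightarrow> g differentiable (at p) \<Longrightarrow>
   dzb g p = cnjv (dz g p)"
proof -
  assume a: "open U" "p \<in> U" "\<forall>q\<in>U. realv (g q)" "g differentiable (at p)"
  have "dzb g p = dzb (\<lambda>q. cnjv (g q)) p"
    using dzb_local[OF a(1,2)] a(3) by (simp add: realv_cnjv)
  thus ?thesis using dzb_cnjv[OF a(4)] by simp
qed

lemma dz_real: "open U \<Longrightarrow> p \<in> U \<Longrightarrow> \<forall>q\<in>U. realv (g q) \<Longrightarrow> g differentiable (at p) \<Longrightarrow>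
   dz g p = cnjv (dzb g p)"
proof -
  assume a: "open U" "p \<in> U" "\<forall>q\<in>U. realv (g q)" "g differentiable (at p)"
  have "cnjv (dzb g p) = cnjv (cnjv (dz g p))" using dzb_real[OF a] by simp
  thus ?thesis by simp
qed



lemma Db_comb:
  fixes X Y :: "complex \<Rightarrow> cvec"
  assumes "X differentiable (at p)" "Y differentiable (at p)"
  shows "Db b (\<lambda>q. (1/2) *s (X q + c *s Y q)) p = (1/2) *s (Db b X p + c *s Db b Y p)"
proof -
  have dY: "(\<lambda>q. c *s Y q) differentiable (at p)" using diff_linear[OF bl_smult_right assms(2)] .
  have "Db b (\<lambda>q. (1/2) *s (X q + c *s Y q)) p = (1/2) *s Db b (\<lambda>q. X q + c *s Y q) p"
    using Db_linear[OF bl_smult_right differentiable_add[OF assms(1) dY]] .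
  also have "Db b (\<lambda>q. X q + c *s Y q) p = Db b X p + Db b (\<lambda>q. c *s Y q) p"
    using Db_add[OF assms(1) dY] .
  also have "Db b (\<lambda>q. c *s Y q) p = c *s Db b Y p"
    using Db_linear[OF bl_smult_right assms(2)] .
  finally show ?thesis .
qed

lemma dz_fun: "dz g = (\<lambda>q. (1/2) *s (Db True g q + (- \<i>) *s Db False g q))"
  by (rule ext) (simp add: dz_Db vec_eq_iff)
lemma dzb_fun: "dzb g = (\<lambda>q. (1/2) *s (Db True g q + \<i> *s Db False g q))"
  by (rule ext) (simp add: dzb_Db)

lemma comm_dz_dzb:
  fixes g :: "complex \<Rightarrow> cvec"
  assumes U: "open U" "p \<in> U" and S: "smoothn 2 U g"
  shows "dzb (dz g) p = dz (dzb g) p"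
proof -
  have S1: "smoothn 1 U (Db b g)" for b using S smoothn_Db[of 1 U g b] by (simp add: numeral_2_eq_2)
  have d: "Db b g differentiable (at p)" for b using S1 smoothn_0_diff U(2) by blast
  have m: "Db False (Db True g) p = Db True (Db False g) p" using mixed_vec[OF U S] .
  have A: "Db b (dz g) p = (1/2) *s (Db b (Db True g) p + (- \<i>) *s Db b (Db False g) p)" for b
    unfolding dz_fun by (rule Db_comb[OF d d])
  have B: "Db b (dzb g) p = (1/2) *s (Db b (Db True g) p + \<i> *s Db b (Db False g) p)" for b
    unfolding dzb_fun by (rule Db_comb[OF d d])
  show ?thesis unfolding dzb_Db[of "dz g"] dz_Db[of "dzb g"] A B m
    by (simp add: vec_eq_iff field_simps)
qed

lemma smooth_on_dz: "open U \<Longrightarrow> smooth_on U g \<Longrightarrow> smooth_on U (dz g)"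
  unfolding dz_fun
  by (intro smooth_on_linear[OF _ bl_smult_right] smooth_on_add smooth_on_Db smooth_on_linear[OF _ bl_smult_right])
lemma smooth_on_dzb: "open U \<Longrightarrow> smooth_on U g \<Longrightarrow> smooth_on U (dzb g)"
  unfolding dzb_fun
  by (intro smooth_on_linear[OF _ bl_smult_right] smooth_on_add smooth_on_Db smooth_on_linear[OF _ bl_smult_right])

lemma dzs_fun: "dzs g = (\<lambda>q. (1/2) * (Db True g q + (- \<i>) * Db False g q))"
  by (rule ext) (simp add: dzs_Db field_simps)
lemma dzbs_fun: "dzbs g = (\<lambda>q. (1/2) * (Db True g q + \<i> * Db False g q))"
  by (rule ext) (simp add: dzbs_Db field_simps)

lemma smooth_on_dzs: "open U \<Longrightarrow> smooth_on U g \<Longrightarrow> smooth_on U (dzs g)"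
  unfolding dzs_fun
  by (intro smooth_on_linear[OF _ bounded_linear_mult_right] smooth_on_add smooth_on_Db)
lemma smooth_on_dzbs: "open U \<Longrightarrow> smooth_on U g \<Longrightarrow> smooth_on U (dzbs g)"
  unfolding dzbs_fun
  by (intro smooth_on_linear[OF _ bounded_linear_mult_right] smooth_on_add smooth_on_Db)

lemma smooth_on_lor: "open U \<Longrightarrow> smooth_on U g \<Longrightarrow> smooth_on U h \<Longrightarrow> smooth_on U (\<lambda>q. lor (g q) (h q))"
  by (rule smooth_on_bilinear[OF _ bounded_bilinear_lor])
lemma smooth_on_smult: fixes c :: "complex \<Rightarrow> complex" and g :: "complex \<Rightarrow> cvec" shows "open U \<Longrightarrow> smooth_on U c \<Longrightarrow> smooth_on U g \<Longrightarrow> smooth_on U (\<lambda>q. c q *s g q)"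
  by (rule smooth_on_bilinear[OF _ bounded_bilinear_smult])
lemma smooth_on_mult: "open U \<Longrightarrow> smooth_on U (a::complex\<Rightarrow>complex) \<Longrightarrow> smooth_on U b \<Longrightarrow> smooth_on U (\<lambda>q. a q * b q)"
  by (rule smooth_on_bilinear[OF _ bounded_bilinear_mult])
lemma smooth_on_cnjv: "open U \<Longrightarrow> smooth_on U g \<Longrightarrow> smooth_on U (\<lambda>q. cnjv (g q))"
  by (rule smooth_on_linear[OF _ bounded_linear_cnjv])
lemma smooth_on_uminus: "open U \<Longrightarrow> smooth_on U (g :: complex \<Rightarrow> 'a::real_normed_vector) \<Longrightarrow> smooth_on U (\<lambda>q. - g q)"
  by (rule smooth_on_linear[OF _ bounded_linear_minus[OF bounded_linear_ident]])
lemma smooth_on_sub: "open U \<Longrightarrow> smooth_on U (g :: complex \<Rightarrow> 'a::real_normed_vector) \<Longrightarrow> smooth_on U h \<Longrightarrow> smooth_on U (\<lambda>q. g q - h q)"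
  using smooth_on_add[of U g "\<lambda>q. - h q"] smooth_on_uminus[of U h] by simp



lemma exhaust_5:
  fixes x :: 5
  shows "x = 0 \<or> x = 1 \<or> x = 2 \<or> x = 3 \<or> x = 4"
proof (induct x)
  case (of_int z)
  then have "z = 0 \<or> z = 1 \<or> z = 2 \<or> z = 3 \<or> z = 4" by fastforce
  then show ?case by auto
qed

lemma complete5:
  fixes e0 P Q R S v :: cvec
  assumes g: "lor e0 e0 = 1" "lor P P = 0" "lor Q Q = 0" "lor R R = 0" "lor S S = 0"
    "lor P Q = c" "c \<noteq> 0" "lor R S = d" "d \<noteq> 0"
    "lor e0 P = 0" "lor e0 Q = 0" "lor e0 R = 0" "lor e0 S = 0"
    "lor P R = 0" "lor P S = 0" "lor Q R = 0" "lor Q S = 0"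
  and o: "lor v e0 = 0" "lor v P = 0" "lor v Q = 0" "lor v R = 0" "lor v S = 0"
  shows "v = 0"
proof -
  define bb where "bb k = (if k = (0::5) then e0 else if k = 1 then P else if k = 2 then Q else if k = 3 then R else S)" for k
  define T where "T x = (\<chi> k. lor x (bb k))" for x
  have lin: "linear T"
    by (rule linearI) (simp_all add: T_def vec_eq_iff lor_scaleR1)
  have surj: "surj T"
  proof (rule surjI)
    fix y :: cvec
    let ?x = "y$0 *s e0 + (y$2 / c) *s P + (y$1 / c) *s Q + (y$4 / d) *s R + (y$3 / d) *s S"
    have "T ?x $ k = y $ k" for k
    proof -
      have "k = 0 \<or> k = 1 \<or> k = 2 \<or> k = 3 \<or> k = 4" by (rule exhaust_5)
      thus ?thesis using g
        by (auto simp: T_def bb_def lor_sym[of Q P] lor_sym[of S R] lor_sym[of P e0] lor_sym[of Q e0]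
              lor_sym[of R e0] lor_sym[of S e0] lor_sym[of R P] lor_sym[of S P] lor_sym[of R Q] lor_sym[of S Q])
    qed
    thus "T ?x = y" by (simp add: vec_eq_iff)
  qed
  have inj: "inj T" by (rule linear_surjective_imp_injective[OF lin surj]) simp
  have "T v = 0"
  proof -
    have "T v $ k = 0" for k
    proof -
      have "k = 0 \<or> k = 1 \<or> k = 2 \<or> k = 3 \<or> k = 4" by (rule exhaust_5)
      thus ?thesis using o by (auto simp: T_def bb_def)
    qed
    thus ?thesis by (simp add: vec_eq_iff)
  qed
  moreover have "T 0 = 0" by (simp add: T_def vec_eq_iff)
  ultimately show ?thesis using inj by (metis injD)
qed



locale mt =
  fixes U :: "complex set" and f N1 N2 :: "complex \<Rightarrow> complex ^ 5" and h :: "complex \<Rightarrow> real"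
  assumes immersion: "conformal_spacelike_immersion U f"
    and in_deSitter: "\<forall>p\<in>U. lor (f p) (f p) = 1"
    and frame: "normal_frame U f N1 N2"
    and marginally_trapped: "\<forall>p\<in>U. lor (mean_curv f p) (mean_curv f p) = 0"
    and orientation: "\<forall>p\<in>U. mean_curv f p = complex_of_real (h p) *s (N1 p + N2 p)"
    and non_isotropic: "\<forall>p\<in>U. (xi1 f N1 p)\<^sup>2 - (xi2 f N2 p)\<^sup>2 \<noteq> 0"
begin

definition l where "l = (\<lambda>q. N1 q + N2 q)"
definition m where "m = (\<lambda>q. N1 q - N2 q)"
definition Ec where "Ec q = lor (dz f q) (dzb f q)"
definition E where "E q = e2u f q"
definition fz where "fz = dz f"
definition fzb where "fzb = dzb f"
definition fzz where "fzz = dz (dz f)"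
definition fzzb where "fzzb = dzb (dz f)"
definition fzbzb where "fzbzb = dzb (dzb f)"
definition a where "a q = lor (l q) (fzz q)"
definition ab where "ab q = lor (l q) (fzbzb q)"
definition \<sigma> where "\<sigma> q = lor (dzb l q) (m q) / 2"
definition g where "g q = lor (fzzb q) (m q) / 2"

lemma oU: "open U" using immersion by (simp add: conformal_spacelike_immersion_def)
lemma sf: "smooth_on U f" using immersion by (simp add: conformal_spacelike_immersion_def)
lemma sN1: "smooth_on U N1" using frame by (simp add: normal_frame_def)
lemma sN2: "smooth_on U N2" using frame by (simp add: normal_frame_def)
lemma sl: "smooth_on U l" unfolding l_def by (rule smooth_on_add[OF oU sN1 sN2])
lemma sm: "smooth_on U m" unfolding m_def by (rule smooth_on_sub[OF oU sN1 sN2])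
lemma sfz: "smooth_on U fz" unfolding fz_def by (rule smooth_on_dz[OF oU sf])
lemma sfzb: "smooth_on U fzb" unfolding fzb_def by (rule smooth_on_dzb[OF oU sf])
lemma sfzz: "smooth_on U fzz" unfolding fzz_def by (rule smooth_on_dz[OF oU sfz[unfolded fz_def]])
lemma sfzzb: "smooth_on U fzzb" unfolding fzzb_def by (rule smooth_on_dzb[OF oU sfz[unfolded fz_def]])
lemma sfzbzb: "smooth_on U fzbzb" unfolding fzbzb_def by (rule smooth_on_dzb[OF oU sfzb[unfolded fzb_def]])
lemma slzb: "smooth_on U (dzb l)" by (rule smooth_on_dzb[OF oU sl])
lemma slz: "smooth_on U (dz l)" by (rule smooth_on_dz[OF oU sl])
lemma sEc: "smooth_on U Ec" unfolding Ec_def using smooth_on_lor[OF oU sfz sfzb] by (simp add: fz_def fzb_def)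
lemma sa: "smooth_on U a" unfolding a_def by (rule smooth_on_lor[OF oU sl sfzz])
lemma sab: "smooth_on U ab" unfolding ab_def by (rule smooth_on_lor[OF oU sl sfzbzb])
lemma s\<sigma>: "smooth_on U \<sigma>" unfolding \<sigma>_def
  by (rule smooth_on_linear[OF oU _ smooth_on_lor[OF oU slzb sm]]) (rule bounded_linear_divide)
lemma sg: "smooth_on U g" unfolding g_def
  by (rule smooth_on_linear[OF oU _ smooth_on_lor[OF oU sfzzb sm]]) (rule bounded_linear_divide)

lemma dif: "smooth_on U F \<Longrightarrow> p \<in> U \<Longrightarrow> F differentiable (at p)" by (rule smooth_on_diff)

lemma realf: "p \<in> U \<Longrightarrow> realv (f p)" using immersion by (simp add: conformal_spacelike_immersion_def)
lemma fr: "p \<in> U \<Longrightarrow> realv (N1 p) \<and> realv (N2 p) \<and>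
        lor (N1 p) (N1 p) = 1 \<and> lor (N2 p) (N2 p) = -1 \<and> lor (N1 p) (N2 p) = 0 \<and>
        lor (N1 p) (f p) = 0 \<and> lor (N2 p) (f p) = 0 \<and>
        lor (N1 p) (dz f p) = 0 \<and> lor (N2 p) (dz f p) = 0 \<and> future (N2 p)"
  using frame by (simp add: normal_frame_def)

lemma cnjv_real: "realv v \<Longrightarrow> cnjv v = v" by (simp add: realv_cnjv)

lemma rN1: "p \<in> U \<Longrightarrow> cnjv (N1 p) = N1 p" using fr cnjv_real by blast
lemma rN2: "p \<in> U \<Longrightarrow> cnjv (N2 p) = N2 p" using fr cnjv_real by blast
lemma reall: "p \<in> U \<Longrightarrow> cnjv (l p) = l p" by (simp add: l_def rN1 rN2)
lemma realm: "p \<in> U \<Longrightarrow> cnjv (m p) = m p" by (simp add: m_def rN1 rN2)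
lemma realf': "p \<in> U \<Longrightarrow> cnjv (f p) = f p" using realf by (simp add: realv_cnjv)

lemma fzb_cnj: "p \<in> U \<Longrightarrow> fzb p = cnjv (fz p)"
  unfolding fzb_def fz_def by (rule dzb_real[OF oU _ _ dif[OF sf]]) (auto simp: realf)
lemma lzb_cnj: "p \<in> U \<Longrightarrow> dzb l p = cnjv (dz l p)"
  by (rule dzb_real[OF oU _ _ dif[OF sl]]) (auto simp: realv_cnjv reall)
lemma fzbzb_cnj: "p \<in> U \<Longrightarrow> fzbzb p = cnjv (fzz p)"
proof -
  assume p: "p \<in> U"
  have "fzbzb p = dzb (\<lambda>q. cnjv (fz q)) p"
    unfolding fzbzb_def using dzb_local[OF oU p, of "dzb f" "\<lambda>q. cnjv (fz q)"] fzb_cnj by (simp add: fzb_def)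
  also have "\<dots> = cnjv (fzz p)" unfolding fzz_def fz_def by (rule dzb_cnjv[OF dif[OF sfz[unfolded fz_def] p]])
  finally show ?thesis .
qed

end


context mt begin

lemma ff: "p \<in> U \<Longrightarrow> lor (f p) (f p) = 1" using in_deSitter by simp

lemma lor_self_deriv:
  assumes "smooth_on U F" "p \<in> U" "\<forall>q\<in>U. lor (F q) (F q) = c"
  shows "lor (dz F p) (F p) = 0" "lor (dzb F p) (F p) = 0"
proof -
  have "dzs (\<lambda>q. lor (F q) (F q)) p = 0" using dzs_zero[OF oU assms(2,3)] .
  hence "lor (dz F p) (F p) + lor (F p) (dz F p) = 0" using dzs_lor[OF dif[OF assms(1,2)] dif[OF assms(1,2)]] by simp
  thus "lor (dz F p) (F p) = 0" by (simp add: lor_sym[of "F p"])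
  have "dzbs (\<lambda>q. lor (F q) (F q)) p = 0" using dzbs_zero[OF oU assms(2,3)] .
  hence "lor (dzb F p) (F p) + lor (F p) (dzb F p) = 0" using dzbs_lor[OF dif[OF assms(1,2)] dif[OF assms(1,2)]] by simp
  thus "lor (dzb F p) (F p) = 0" by (simp add: lor_sym[of "F p"])
qed

lemma lor_deriv_z:
  assumes "smooth_on U F" "smooth_on U G" "p \<in> U" "\<forall>q\<in>U. lor (F q) (G q) = c"
  shows "lor (dz F p) (G p) = - lor (F p) (dz G p)"
proof -
  have "dzs (\<lambda>q. lor (F q) (G q)) p = 0" using dzs_zero[OF oU assms(3,4)] .
  thus ?thesis using dzs_lor[OF dif[OF assms(1,3)] dif[OF assms(2,3)]] by (simp add: eq_neg_iff_add_eq_0)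
qed

lemma lor_deriv_zb:
  assumes "smooth_on U F" "smooth_on U G" "p \<in> U" "\<forall>q\<in>U. lor (F q) (G q) = c"
  shows "lor (dzb F p) (G p) = - lor (F p) (dzb G p)"
proof -
  have "dzbs (\<lambda>q. lor (F q) (G q)) p = 0" using dzbs_zero[OF oU assms(3,4)] .
  thus ?thesis using dzbs_lor[OF dif[OF assms(1,3)] dif[OF assms(2,3)]] by (simp add: eq_neg_iff_add_eq_0)
qed

lemma ffz: "p \<in> U \<Longrightarrow> lor (fz p) (f p) = 0"
  unfolding fz_def using lor_self_deriv(1)[OF sf _ in_deSitter] by simp
lemma ffzb: "p \<in> U \<Longrightarrow> lor (fzb p) (f p) = 0"
  unfolding fzb_def using lor_self_deriv(2)[OF sf _ in_deSitter] by simp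
lemma fzfz: "p \<in> U \<Longrightarrow> lor (fz p) (fz p) = 0"
  using immersion by (simp add: conformal_spacelike_immersion_def fz_def)
lemma fzbfzb: "p \<in> U \<Longrightarrow> lor (fzb p) (fzb p) = 0"
proof -
  assume p: "p \<in> U"
  have "lor (fzb p) (fzb p) = cnj (lor (fz p) (fz p))" by (simp add: fzb_cnj[OF p] cnj_lor)
  thus ?thesis using fzfz[OF p] by simp
qed
lemma Epos: "p \<in> U \<Longrightarrow> E p > 0"
  using immersion by (simp add: conformal_spacelike_immersion_def E_def)
lemma EcE: "p \<in> U \<Longrightarrow> Ec p = of_real (E p)"
proof -
  assume p: "p \<in> U"
  have "cnj (Ec p) = lor (cnjv (fz p)) (cnjv (fzb p))" unfolding Ec_def by (simp add: cnj_lor fz_def fzb_def)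
  also have "\<dots> = lor (fzb p) (fz p)" by (simp add: fzb_cnj[OF p])
  also have "\<dots> = Ec p" by (simp add: Ec_def lor_sym fz_def fzb_def)
  finally have "Im (Ec p) = 0" by (metis Reals_cnj_iff complex_is_Real_iff)
  moreover have "Re (Ec p) = E p" by (simp add: E_def e2u_def Ec_def)
  ultimately show ?thesis by (simp add: complex_eq_iff)
qed
lemma Ecnz: "p \<in> U \<Longrightarrow> Ec p \<noteq> 0" using EcE Epos by fastforce
lemma fzfzb: "p \<in> U \<Longrightarrow> lor (fz p) (fzb p) = Ec p" by (simp add: Ec_def fz_def fzb_def)

lemma fzzfz: "p \<in> U \<Longrightarrow> lor (fzz p) (fz p) = 0"
proof -
  assume p: "p \<in> U"
  have "\<forall>q\<in>U. lor (fz q) (fz q) = 0" using fzfz by blast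
  from lor_self_deriv(1)[OF sfz p this] show ?thesis by (simp add: fzz_def fz_def)
qed

lemma N1f: "p \<in> U \<Longrightarrow> lor (N1 p) (f p) = 0" using fr by blast
lemma N2f: "p \<in> U \<Longrightarrow> lor (N2 p) (f p) = 0" using fr by blast
lemma N1fz: "p \<in> U \<Longrightarrow> lor (N1 p) (fz p) = 0" using fr by (simp add: fz_def)
lemma N2fz: "p \<in> U \<Longrightarrow> lor (N2 p) (fz p) = 0" using fr by (simp add: fz_def)
lemma N1N1: "p \<in> U \<Longrightarrow> lor (N1 p) (N1 p) = 1" using fr by blast
lemma N2N2: "p \<in> U \<Longrightarrow> lor (N2 p) (N2 p) = -1" using fr by blast
lemma N1N2: "p \<in> U \<Longrightarrow> lor (N1 p) (N2 p) = 0" using fr by blast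
lemma N1fzb: "p \<in> U \<Longrightarrow> lor (N1 p) (fzb p) = 0"
proof -
  assume p: "p \<in> U"
  have "lor (N1 p) (fzb p) = cnj (lor (N1 p) (fz p))" by (simp add: cnj_lor fzb_cnj[OF p] rN1[OF p])
  thus ?thesis using N1fz[OF p] by simp
qed
lemma N2fzb: "p \<in> U \<Longrightarrow> lor (N2 p) (fzb p) = 0"
proof -
  assume p: "p \<in> U"
  have "lor (N2 p) (fzb p) = cnj (lor (N2 p) (fz p))" by (simp add: cnj_lor fzb_cnj[OF p] rN2[OF p])
  thus ?thesis using N2fz[OF p] by simp
qed

lemma lf: "p \<in> U \<Longrightarrow> lor (l p) (f p) = 0" by (simp add: l_def N1f N2f)
lemma lfz: "p \<in> U \<Longrightarrow> lor (l p) (fz p) = 0" by (simp add: l_def N1fz N2fz)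
lemma lfzb: "p \<in> U \<Longrightarrow> lor (l p) (fzb p) = 0" by (simp add: l_def N1fzb N2fzb)
lemma mf: "p \<in> U \<Longrightarrow> lor (m p) (f p) = 0" by (simp add: m_def N1f N2f)
lemma mfz: "p \<in> U \<Longrightarrow> lor (m p) (fz p) = 0" by (simp add: m_def N1fz N2fz)
lemma mfzb: "p \<in> U \<Longrightarrow> lor (m p) (fzb p) = 0" by (simp add: m_def N1fzb N2fzb)
lemma ll: "p \<in> U \<Longrightarrow> lor (l p) (l p) = 0"
  by (simp add: l_def N1N1 N2N2 N1N2 lor_sym[of "N2 p" "N1 p"])
lemma mm: "p \<in> U \<Longrightarrow> lor (m p) (m p) = 0"
  by (simp add: m_def N1N1 N2N2 N1N2 lor_sym[of "N2 p" "N1 p"])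
lemma lm: "p \<in> U \<Longrightarrow> lor (l p) (m p) = 2"
  by (simp add: l_def m_def N1N1 N2N2 N1N2 lor_sym[of "N2 p" "N1 p"])

lemma fzzb_eq1: "p \<in> U \<Longrightarrow> fzzb p = (- Ec p) *s f p + (of_real (E p * h p)) *s l p"
proof -
  assume p: "p \<in> U"
  have "mean_curv f p = of_real (h p) *s l p" using orientation p by (simp add: l_def)
  hence "(1 / of_real (E p)) *s (fzzb p + of_real (E p) *s f p) = of_real (h p) *s l p"
    by (simp add: mean_curv_def E_def fzzb_def)
  hence "of_real (E p) *s ((1 / of_real (E p)) *s (fzzb p + of_real (E p) *s f p)) = of_real (E p) *s (of_real (h p) *s l p)"
    by simp
  hence "fzzb p + of_real (E p) *s f p = of_real (E p * h p) *s l p"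
    using Epos[OF p] by (simp add: vector_smult_assoc)
  thus ?thesis using EcE[OF p] by (simp add: vec_eq_iff algebra_simps)
qed

lemma g_eq: "p \<in> U \<Longrightarrow> g p = of_real (E p * h p)"
proof -
  assume p: "p \<in> U"
  have fm: "lor (f p) (m p) = 0" using mf[OF p] by (simp add: lor_sym)
  show ?thesis unfolding g_def fzzb_eq1[OF p] by (simp add: fm lm[OF p])
qed

lemma fzzb_eq: "p \<in> U \<Longrightarrow> fzzb p = (- Ec p) *s f p + g p *s l p"
  using fzzb_eq1 g_eq by simp

end


context mt begin

lemma sym0: "lor x y = 0 \<Longrightarrow> lor y x = 0" by (simp add: lor_sym)

lemma fm: "p \<in> U \<Longrightarrow> lor (f p) (m p) = 0" using mf by (simp add: lor_sym)
lemma fl: "p \<in> U \<Longrightarrow> lor (f p) (l p) = 0" using lf by (simp add: lor_sym)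
lemma fzl: "p \<in> U \<Longrightarrow> lor (fz p) (l p) = 0" using lfz by (simp add: lor_sym)
lemma fzbl: "p \<in> U \<Longrightarrow> lor (fzb p) (l p) = 0" using lfzb by (simp add: lor_sym)
lemma fzm: "p \<in> U \<Longrightarrow> lor (fz p) (m p) = 0" using mfz by (simp add: lor_sym)
lemma fzbm: "p \<in> U \<Longrightarrow> lor (fzb p) (m p) = 0" using mfzb by (simp add: lor_sym)
lemma ffz': "p \<in> U \<Longrightarrow> lor (f p) (fz p) = 0" using ffz by (simp add: lor_sym)
lemma ffzb': "p \<in> U \<Longrightarrow> lor (f p) (fzb p) = 0" using ffzb by (simp add: lor_sym)
lemma ml: "p \<in> U \<Longrightarrow> lor (m p) (l p) = 2" using lm by (simp add: lor_sym)
lemma fzbfz: "p \<in> U \<Longrightarrow> lor (fzb p) (fz p) = Ec p" using fzfzb by (simp add: lor_sym)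

lemmas gram = ff fzfz fzbfzb ll mm lm ml fzfzb fzbfz lf lfz lfzb mf mfz mfzb fm fl fzl fzbl fzm fzbm ffz ffz' ffzb ffzb'

lemma basis1:
  assumes p: "p \<in> U" and o: "lor v (f p) = 0" "lor v (fz p) = 0" "lor v (fzb p) = 0" "lor v (l p) = 0" "lor v (m p) = 0"
  shows "v = 0"
  by (rule complete5[OF ff[OF p] fzfz[OF p] fzbfzb[OF p] ll[OF p] mm[OF p] fzfzb[OF p] Ecnz[OF p] lm[OF p] _
     ffz'[OF p] ffzb'[OF p] fl[OF p] fm[OF p] fzl[OF p] fzm[OF p] fzbl[OF p] fzbm[OF p] o]) simp

lemma lzbf: "p \<in> U \<Longrightarrow> lor (dzb l p) (f p) = 0"
  using lor_deriv_zb[OF sl sf _ , of p 0] lf lfzb by (simp add: fzb_def)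
lemma lzbfz: "p \<in> U \<Longrightarrow> lor (dzb l p) (fz p) = 0"
proof -
  assume p: "p \<in> U"
  have "lor (dzb l p) (fz p) = - lor (l p) (dzb fz p)"
    using lor_deriv_zb[OF sl sfz p, of 0] lfz by simp
  also have "dzb fz p = fzzb p" by (simp add: fzzb_def fz_def)
  also have "lor (l p) (fzzb p) = 0" using fzzb_eq[OF p] by (simp add: gram[OF p])
  finally show ?thesis by simp
qed
lemma lzbfzb: "p \<in> U \<Longrightarrow> lor (dzb l p) (fzb p) = - ab p"
proof -
  assume p: "p \<in> U"
  have "lor (dzb l p) (fzb p) = - lor (l p) (dzb fzb p)"
    using lor_deriv_zb[OF sl sfzb p, of 0] lfzb by simp
  thus ?thesis by (simp add: ab_def fzbzb_def fzb_def)
qed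
lemma lzbl: "p \<in> U \<Longrightarrow> lor (dzb l p) (l p) = 0"
  using lor_self_deriv(2)[OF sl _ , of p 0] ll by simp
lemma lzbm: "p \<in> U \<Longrightarrow> lor (dzb l p) (m p) = 2 * \<sigma> p" by (simp add: \<sigma>_def)

lemma lzb_eq: "p \<in> U \<Longrightarrow> dzb l p = (- (ab p / Ec p)) *s fz p + \<sigma> p *s l p"
proof -
  assume p: "p \<in> U"
  let ?v = "dzb l p + (ab p / Ec p) *s fz p - \<sigma> p *s l p"
  have "?v = 0"
    by (rule basis1[OF p]) (simp_all add: lzbf[OF p] lzbfz[OF p] lzbfzb[OF p] lzbl[OF p] lzbm[OF p] gram[OF p] Ecnz[OF p])
  thus ?thesis by (simp add: vec_eq_iff algebra_simps)
qed

lemma ab_cnj: "p \<in> U \<Longrightarrow> ab p = cnj (a p)"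
  by (simp add: ab_def a_def fzbzb_cnj cnj_lor reall)

lemma a_nz: "p \<in> U \<Longrightarrow> a p \<noteq> 0"
proof -
  assume p: "p \<in> U"
  have "a p = xi1 f N1 p - xi2 f N2 p"
    by (simp add: a_def l_def xi1_def xi2_def fzz_def lor_sym)
  moreover have "(xi1 f N1 p)\<^sup>2 - (xi2 f N2 p)\<^sup>2 = (xi1 f N1 p - xi2 f N2 p) * (xi1 f N1 p + xi2 f N2 p)"
    by (simp add: power2_eq_square algebra_simps)
  ultimately show ?thesis using non_isotropic p by auto
qed

lemma lz_eq: "p \<in> U \<Longrightarrow> dz l p = (- (a p / Ec p)) *s fzb p + cnj (\<sigma> p) *s l p"
proof -
  assume p: "p \<in> U"
  have "dz l p = cnjv (dzb l p)" using lzb_cnj[OF p] by simp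
  also have "\<dots> = (- (a p / Ec p)) *s fzb p + cnj (\<sigma> p) *s l p"
    unfolding lzb_eq[OF p] using EcE[OF p] by (simp add: ab_cnj[OF p] fzb_cnj[OF p] reall[OF p])
  finally show ?thesis .
qed

lemma lzlz: "p \<in> U \<Longrightarrow> lor (dz l p) (dz l p) = 0"
  unfolding lz_eq by (simp add: gram lor_sym[of "l p" "fzb p"])

lemma lzlzb: "p \<in> U \<Longrightarrow> lor (dz l p) (dzb l p) = a p * cnj (a p) / Ec p"
proof -
  assume p: "p \<in> U"
  show ?thesis unfolding lz_eq[OF p] lzb_eq[OF p] using Ecnz[OF p]
    by (simp add: gram[OF p] ab_cnj[OF p] field_simps power2_eq_square)
qed

lemma lzl: "p \<in> U \<Longrightarrow> lor (dz l p) (l p) = 0"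
  using lor_self_deriv(1)[OF sl _ , of p 0] ll by simp
lemma lzf: "p \<in> U \<Longrightarrow> lor (dz l p) (f p) = 0"
  unfolding lz_eq by (simp add: gram)
lemma lzfz: "p \<in> U \<Longrightarrow> lor (dz l p) (fz p) = - a p"
  unfolding lz_eq using Ecnz by (simp add: gram)
lemma lzfzb: "p \<in> U \<Longrightarrow> lor (dz l p) (fzb p) = 0"
  unfolding lz_eq by (simp add: gram)

end


context mt begin

definition \<rho> where "\<rho> q = Re (lor (dz l q) (dzb l q))"
definition \<mu>r where "\<mu>r q = 1 / sqrt (2 * \<rho> q)"
definition \<mu> where "\<mu> q = complex_of_real (\<mu>r q)"
definition Y where "Y = canon_lift (\<lambda>q. N1 q + N2 q)"

lemma Y_eq: "Y q = \<mu> q *s l q"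
  by (simp add: Y_def canon_lift_def \<mu>_def \<mu>r_def \<rho>_def l_def)

lemma aab: "a p * cnj (a p) = of_real ((cmod (a p))\<^sup>2)"
  by (rule complex_norm_square[symmetric])

lemma \<rho>_eq: "p \<in> U \<Longrightarrow> \<rho> p = (cmod (a p))\<^sup>2 / E p"
proof -
  assume p: "p \<in> U"
  have "lor (dz l p) (dzb l p) = of_real ((cmod (a p))\<^sup>2) / of_real (E p)"
    by (simp only: lzlzb[OF p] EcE[OF p] aab)
  thus ?thesis unfolding \<rho>_def by (simp only: of_real_divide[symmetric] Re_complex_of_real)
qed

lemma \<rho>_pos: "p \<in> U \<Longrightarrow> \<rho> p > 0"
  using a_nz Epos \<rho>_eq by simp

lemma lzlzb': "p \<in> U \<Longrightarrow> lor (dz l p) (dzb l p) = of_real (\<rho> p)"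
proof -
  assume p: "p \<in> U"
  have "lor (dz l p) (dzb l p) = of_real ((cmod (a p))\<^sup>2) / of_real (E p)"
    by (simp only: lzlzb[OF p] EcE[OF p] aab)
  also have "\<dots> = of_real (\<rho> p)" by (simp only: \<rho>_eq[OF p] of_real_divide)
  finally show ?thesis .
qed

lemma s\<rho>: "smooth_on U \<rho>"
  unfolding \<rho>_def by (rule smooth_on_linear[OF oU bounded_linear_Re smooth_on_lor[OF oU slz slzb]])

lemma s\<mu>r: "smooth_on U \<mu>r"
proof -
  have s2: "smooth_on U (\<lambda>q. 2 * \<rho> q)" by (rule smooth_on_linear[OF oU bounded_linear_mult_right s\<rho>])
  have "smooth_on U (\<lambda>q. (2 * \<rho> q) powr (- (1/2)))"
    by (rule smooth_on_powr[OF oU _ s2]) (simp add: \<rho>_pos)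
  moreover have "\<forall>q\<in>U. (2 * \<rho> q) powr (- (1/2)) = \<mu>r q"
  proof
    fix q assume q: "q \<in> U"
    have pos: "2 * \<rho> q > 0" using \<rho>_pos[OF q] by simp
    have "(2 * \<rho> q) powr (- (1/2)) = inverse ((2 * \<rho> q) powr (1/2))" by (rule powr_minus)
    also have "\<dots> = inverse (sqrt (2 * \<rho> q))" using pos by (simp only: powr_half_sqrt less_imp_le)
    also have "\<dots> = 1 / sqrt (2 * \<rho> q)" by (rule inverse_eq_divide)
    finally show "(2 * \<rho> q) powr (- (1/2)) = \<mu>r q" by (simp add: \<mu>r_def)
  qed
  ultimately show ?thesis by (rule smooth_on_local[OF oU, rotated])
qed

lemma s\<mu>: "smooth_on U \<mu>"
  unfolding \<mu>_def by (rule smooth_on_linear[OF oU bounded_linear_of_real s\<mu>r])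

lemma sY: "smooth_on U Y"
  unfolding Y_eq[abs_def] by (rule smooth_on_smult[OF oU s\<mu> sl])
lemma sYz: "smooth_on U (dz Y)" by (rule smooth_on_dz[OF oU sY])
lemma sYzb: "smooth_on U (dzb Y)" by (rule smooth_on_dzb[OF oU sY])
lemma sW: "smooth_on U (dzb (dz Y))" by (rule smooth_on_dzb[OF oU sYz])
lemma sYzz: "smooth_on U (dz (dz Y))" by (rule smooth_on_dz[OF oU sYz])

lemma \<mu>_cnj[simp]: "cnj (\<mu> q) = \<mu> q" by (simp add: \<mu>_def)
lemma \<mu>sq: "p \<in> U \<Longrightarrow> \<mu> p * \<mu> p * of_real (\<rho> p) = 1/2"
proof -
  assume p: "p \<in> U"
  have pos: "2 * \<rho> p > 0" using \<rho>_pos[OF p] by simp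
  have r: "\<mu>r p * \<mu>r p * \<rho> p = 1/2"
    unfolding \<mu>r_def using pos by (simp add: field_simps)
  have "\<mu> p * \<mu> p * of_real (\<rho> p) = complex_of_real (\<mu>r p * \<mu>r p * \<rho> p)"
    unfolding \<mu>_def by (simp only: of_real_mult)
  also have "\<dots> = complex_of_real (1/2)" using r by (rule arg_cong)
  also have "\<dots> = 1/2" by simp
  finally show ?thesis .
qed
lemma \<mu>_nz: "p \<in> U \<Longrightarrow> \<mu> p \<noteq> 0" using \<mu>sq by fastforce

lemma Yz_eq: "p \<in> U \<Longrightarrow> dz Y p = \<mu> p *s dz l p + dzs \<mu> p *s l p"
  unfolding Y_eq[abs_def] by (rule dz_smult[OF dif[OF s\<mu>] dif[OF sl]])
lemma Yzb_eq: "p \<in> U \<Longrightarrow> dzb Y p = \<mu> p *s dzb l p + dzbs \<mu> p *s l p"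
  unfolding Y_eq[abs_def] by (rule dzb_smult[OF dif[OF s\<mu>] dif[OF sl]])

lemma rY: "p \<in> U \<Longrightarrow> cnjv (Y p) = Y p" by (simp add: Y_eq reall)
lemma Yzb_cnj: "p \<in> U \<Longrightarrow> dzb Y p = cnjv (dz Y p)"
  by (rule dzb_real[OF oU _ _ dif[OF sY]]) (auto simp: realv_cnjv rY)

lemma YY: "p \<in> U \<Longrightarrow> lor (Y p) (Y p) = 0" by (simp add: Y_eq gram)
lemma Yf: "p \<in> U \<Longrightarrow> lor (Y p) (f p) = 0" by (simp add: Y_eq gram)
lemma Yfz: "p \<in> U \<Longrightarrow> lor (Y p) (fz p) = 0" by (simp add: Y_eq gram)
lemma Yfzb: "p \<in> U \<Longrightarrow> lor (Y p) (fzb p) = 0" by (simp add: Y_eq gram)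
lemma Ym: "p \<in> U \<Longrightarrow> lor (Y p) (m p) = 2 * \<mu> p" by (simp add: Y_eq gram)
lemma Yl: "p \<in> U \<Longrightarrow> lor (Y p) (l p) = 0" by (simp add: Y_eq gram)

lemma YzY: "p \<in> U \<Longrightarrow> lor (dz Y p) (Y p) = 0"
  using lor_self_deriv(1)[OF sY _ , of p 0] YY by simp
lemma YzbY: "p \<in> U \<Longrightarrow> lor (dzb Y p) (Y p) = 0"
  using lor_self_deriv(2)[OF sY _ , of p 0] YY by simp

lemma lzbl': "p \<in> U \<Longrightarrow> lor (l p) (dzb l p) = 0" using lzbl by (simp add: lor_sym)
lemma lzl': "p \<in> U \<Longrightarrow> lor (l p) (dz l p) = 0" using lzl by (simp add: lor_sym)
lemma lzblz: "p \<in> U \<Longrightarrow> lor (dzb l p) (dz l p) = of_real (\<rho> p)" using lzlzb' by (simp add: lor_sym)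

lemma YzYz: "p \<in> U \<Longrightarrow> lor (dz Y p) (dz Y p) = 0"
  by (simp add: Yz_eq lzlz lzl lzl' ll)
lemma YzYzb: "p \<in> U \<Longrightarrow> lor (dz Y p) (dzb Y p) = 1/2"
proof -
  assume p: "p \<in> U"
  have "lor (dz Y p) (dzb Y p) = \<mu> p * \<mu> p * of_real (\<rho> p)"
    by (simp add: Yz_eq[OF p] Yzb_eq[OF p] lzlzb'[OF p] lzl[OF p] lzl'[OF p] lzbl[OF p] lzbl'[OF p] ll[OF p])
  thus ?thesis using \<mu>sq[OF p] by simp
qed
lemma YzbYz: "p \<in> U \<Longrightarrow> lor (dzb Y p) (dz Y p) = 1/2" using YzYzb by (simp add: lor_sym)
lemma YzbYzb: "p \<in> U \<Longrightarrow> lor (dzb Y p) (dzb Y p) = 0"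
proof -
  assume p: "p \<in> U"
  have "lor (dzb Y p) (dzb Y p) = cnj (lor (dz Y p) (dz Y p))" by (simp add: Yzb_cnj[OF p] cnj_lor)
  thus ?thesis using YzYz[OF p] by simp
qed
lemma Yzf: "p \<in> U \<Longrightarrow> lor (dz Y p) (f p) = 0" by (simp add: Yz_eq lzf gram)
lemma Yzfz: "p \<in> U \<Longrightarrow> lor (dz Y p) (fz p) = - \<mu> p * a p" by (simp add: Yz_eq lzfz gram)
lemma Yzfzb: "p \<in> U \<Longrightarrow> lor (dz Y p) (fzb p) = 0" by (simp add: Yz_eq lzfzb gram)
lemma Yzbf: "p \<in> U \<Longrightarrow> lor (dzb Y p) (f p) = 0" by (simp add: Yzb_eq lzbf gram)
lemma Yzbfz: "p \<in> U \<Longrightarrow> lor (dzb Y p) (fz p) = 0" by (simp add: Yzb_eq lzbfz gram)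

end


context mt begin

definition W where "W = dzb (dz Y)"

lemma smooth2: "smooth_on U F \<Longrightarrow> smoothn 2 U F" by (simp add: smooth_on_n)

lemma W_comm: "p \<in> U \<Longrightarrow> W p = dz (dzb Y) p"
  unfolding W_def by (rule comm_dz_dzb[OF oU _ smooth2[OF sY]])

lemma W_real: "p \<in> U \<Longrightarrow> cnjv (W p) = W p"
proof -
  assume p: "p \<in> U"
  have "W p = dzb (\<lambda>q. cnjv (dzb Y q)) p"
    unfolding W_def by (rule dzb_local[OF oU p]) (simp add: Yzb_cnj)
  also have "\<dots> = cnjv (dz (dzb Y) p)" by (rule dzb_cnjv[OF dif[OF sYzb p]])
  also have "\<dots> = cnjv (W p)" using W_comm[OF p] by simp
  finally show ?thesis by simp
qed

lemma YW: "p \<in> U \<Longrightarrow> lor (Y p) (W p) = - (1/2)"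
proof -
  assume p: "p \<in> U"
  have "\<forall>q\<in>U. lor (Y q) (dz Y q) = 0" using YzY by (simp add: lor_sym)
  from lor_deriv_zb[OF sY sYz p this] have "lor (dzb Y p) (dz Y p) = - lor (Y p) (W p)" by (simp add: W_def)
  hence "lor (Y p) (W p) = - lor (dzb Y p) (dz Y p)" by simp
  thus ?thesis using YzbYz[OF p] by simp
qed
lemma YzW: "p \<in> U \<Longrightarrow> lor (dz Y p) (W p) = 0"
proof -
  assume p: "p \<in> U"
  have "\<forall>q\<in>U. lor (dz Y q) (dz Y q) = 0" using YzYz by simp
  from lor_self_deriv(2)[OF sYz p this] show ?thesis by (simp add: W_def lor_sym)
qed
lemma YzbW: "p \<in> U \<Longrightarrow> lor (dzb Y p) (W p) = 0"
proof -
  assume p: "p \<in> U"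
  have "\<forall>q\<in>U. lor (dzb Y q) (dzb Y q) = 0" using YzbYzb by simp
  from lor_self_deriv(1)[OF sYzb p this] show ?thesis by (simp add: W_comm[OF p] lor_sym)
qed
lemma fW: "p \<in> U \<Longrightarrow> lor (f p) (W p) = 0"
proof -
  assume p: "p \<in> U"
  have "\<forall>q\<in>U. lor (f q) (dz Y q) = 0" using Yzf by (simp add: lor_sym)
  from lor_deriv_zb[OF sf sYz p this] have "lor (dzb f p) (dz Y p) = - lor (f p) (W p)" by (simp add: W_def)
  moreover have "lor (dzb f p) (dz Y p) = 0" using Yzfzb[OF p] by (simp add: lor_sym fzb_def)
  ultimately show ?thesis by simp
qed

definition qq where "qq p = lor (W p) (W p)"
lemma qq_real: "p \<in> U \<Longrightarrow> qq p = of_real (Re (qq p))"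
proof -
  assume p: "p \<in> U"
  have "cnj (qq p) = qq p" unfolding qq_def by (simp add: cnj_lor W_real[OF p])
  thus ?thesis by (metis Reals_cnj_iff complex_is_Real_iff of_real_Re)
qed

lemma YYz: "p \<in> U \<Longrightarrow> lor (Y p) (dz Y p) = 0" using YzY by (simp add: lor_sym)

definition Nn where "Nn p = of_real (2 * Re (qq p)) *s Y p + 2 *s W p"

lemma vre_eq: "vre v = (1/2) *s (v + cnjv v)"
  by (simp add: vre_def vec_eq_iff complex_eq_iff)
lemma vim_eq: "vim v = (- \<i> / 2) *s (v - cnjv v)"
  by (simp add: vim_def vec_eq_iff complex_eq_iff)

lemma YNn: "p \<in> U \<Longrightarrow> lor (Y p) (Nn p) = -1" by (simp add: Nn_def YY YW)
lemma YzNn: "p \<in> U \<Longrightarrow> lor (dz Y p) (Nn p) = 0" by (simp add: Nn_def YzY YzW)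
lemma YzbNn: "p \<in> U \<Longrightarrow> lor (dzb Y p) (Nn p) = 0" by (simp add: Nn_def YzbY YzbW)
lemma WY: "p \<in> U \<Longrightarrow> lor (W p) (Y p) = - (1/2)" using YW by (simp add: lor_sym)
lemma NnYz: "p \<in> U \<Longrightarrow> lor (Nn p) (dz Y p) = 0" using YzNn by (simp add: lor_sym)
lemma fY: "p \<in> U \<Longrightarrow> lor (f p) (Y p) = 0" using Yf by (simp add: lor_sym)
lemma fNn: "p \<in> U \<Longrightarrow> lor (f p) (Nn p) = 0" by (simp add: Nn_def fW fY)
lemma NnNn: "p \<in> U \<Longrightarrow> lor (Nn p) (Nn p) = 0"
proof -
  assume p: "p \<in> U"
  have "lor (Nn p) (Nn p) = 8 * of_real (Re (qq p)) * lor (Y p) (W p) + 4 * lor (W p) (W p)"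
    by (simp add: Nn_def YY[OF p] lor_sym[of "W p" "Y p"] algebra_simps)
  also have "\<dots> = 8 * of_real (Re (qq p)) * (- (1/2)) + 4 * qq p" by (simp only: YW[OF p] qq_def)
  also have "\<dots> = 0" using qq_real[OF p] by (simp add: algebra_simps)
  finally show ?thesis .
qed

lemma normalN_eq: "p \<in> U \<Longrightarrow> normalN Y p = Nn p"
proof -
  assume p: "p \<in> U"
  have Wre: "vre (W p) = W p" using W_real[OF p] by (simp add: vre_eq vec_eq_iff)
  have memb: "Nn p \<in> Vspace Y p"
  proof -
    have "Nn p = complex_of_real (2 * Re (qq p)) *s Y p + complex_of_real 0 *s vre (dz Y p)
         + complex_of_real 0 *s vim (dz Y p) + complex_of_real 2 *s vre (dzb (dz Y) p)"
      using Wre by (simp add: Nn_def W_def)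
    thus ?thesis unfolding Vspace_def by blast
  qed
  have uniq: "n = Nn p" if H: "n \<in> Vspace Y p" "lor n n = 0" "lor n (dz Y p) = 0" "lor (Y p) n = -1" for n
  proof -
    obtain x y z w where n: "n = complex_of_real x *s Y p + complex_of_real y *s vre (dz Y p)
         + complex_of_real z *s vim (dz Y p) + complex_of_real w *s vre (dzb (dz Y) p)"
      using H(1) unfolding Vspace_def by blast
    have n': "n = complex_of_real x *s Y p + (complex_of_real y / 2) *s (dz Y p + dzb Y p)
         + (complex_of_real z * (- \<i> / 2)) *s (dz Y p - dzb Y p) + complex_of_real w *s W p"
      unfolding n W_def[symmetric] Wre vre_eq[of "dz Y p"] vim_eq[of "dz Y p"]
      by (simp add: Yzb_cnj[OF p] vector_smult_assoc)
    have lYn: "lor (Y p) n = - complex_of_real w / 2"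
      unfolding n' by (simp add: YY[OF p] lor_sym[of "Y p" "dz Y p"] YzY[OF p] lor_sym[of "Y p" "dzb Y p"] YzbY[OF p] YW[OF p])
    hence w: "w = 2" using H(4) by (simp add: complex_eq_iff)
    have lnz: "lor n (dz Y p) = (complex_of_real y / 2) * (1/2) + (complex_of_real z * (- \<i> / 2)) * (0 - 1/2)"
      unfolding n' lor_add1 lor_diff1 lor_smult1 YYz[OF p] YzYz[OF p] YzbYz[OF p] lor_sym[of "W p" "dz Y p"] YzW[OF p]
      by simp
    hence yz: "y = 0" "z = 0" using H(3) by (simp_all add: complex_eq_iff)
    have nn: "n = complex_of_real x *s Y p + 2 *s W p" using n' w yz by simp
    have "lor n n = - 2 * of_real x + 4 * qq p"
      unfolding nn lor_add1 lor_add2 lor_smult1 lor_smult2 YY[OF p] YW[OF p] WY[OF p] qq_def[symmetric]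
      by (simp add: algebra_simps)
    hence "x = 2 * Re (qq p)" using H(2) qq_real[OF p] by (simp add: complex_eq_iff)
    thus ?thesis using nn by (simp add: Nn_def)
  qed
  have "Nn p \<in> Vspace Y p \<and> lor (Nn p) (Nn p) = 0 \<and> lor (Nn p) (dz Y p) = 0 \<and> lor (Y p) (Nn p) = -1"
    using memb NnNn[OF p] NnYz[OF p] YNn[OF p] by simp
  thus ?thesis unfolding normalN_def by (rule the_equality) (rule uniq, auto)
qed

end


context mt begin

definition k0 where "k0 p = lor (dz (dz Y) p) (f p)"

lemma fYz: "p \<in> U \<Longrightarrow> lor (f p) (dz Y p) = 0" using Yzf by (simp add: lor_sym)
lemma fYzb: "p \<in> U \<Longrightarrow> lor (f p) (dzb Y p) = 0" using Yzbf by (simp add: lor_sym)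

lemma k0_eq: "p \<in> U \<Longrightarrow> k0 p = \<mu> p * a p"
proof -
  assume p: "p \<in> U"
  have "\<forall>q\<in>U. lor (dz Y q) (f q) = 0" using Yzf by simp
  from lor_deriv_z[OF sYz sf p this] have "k0 p = - lor (dz Y p) (fz p)" by (simp add: k0_def fz_def)
  thus ?thesis using Yzfz[OF p] by simp
qed

lemma YzzYz: "p \<in> U \<Longrightarrow> lor (dz (dz Y) p) (dz Y p) = 0"
proof -
  assume p: "p \<in> U"
  have "\<forall>q\<in>U. lor (dz Y q) (dz Y q) = 0" using YzYz by simp
  from lor_self_deriv(1)[OF sYz p this] show ?thesis .
qed
lemma YzzYzb: "p \<in> U \<Longrightarrow> lor (dz (dz Y) p) (dzb Y p) = 0"
proof -
  assume p: "p \<in> U"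
  have "\<forall>q\<in>U. lor (dz Y q) (dzb Y q) = 1/2" using YzYzb by simp
  from lor_deriv_z[OF sYz sYzb p this] have "lor (dz (dz Y) p) (dzb Y p) = - lor (dz Y p) (W p)"
    by (simp add: W_comm[OF p])
  thus ?thesis using YzW[OF p] by simp
qed
lemma YzzY: "p \<in> U \<Longrightarrow> lor (dz (dz Y) p) (Y p) = 0"
proof -
  assume p: "p \<in> U"
  have "\<forall>q\<in>U. lor (dz Y q) (Y q) = 0" using YzY by simp
  from lor_deriv_z[OF sYz sY p this] have "lor (dz (dz Y) p) (Y p) = - lor (dz Y p) (dz Y p)" .
  thus ?thesis using YzYz[OF p] by simp
qed

lemma schw_eq: "p \<in> U \<Longrightarrow> schwarzian Y p = 2 * lor (dz (dz Y) p) (Nn p)"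
  by (simp add: schwarzian_def normalN_eq)

lemma hopf_eq: "p \<in> U \<Longrightarrow> hopf_diff Y p = k0 p *s f p"
proof -
  assume p: "p \<in> U"
  let ?v = "hopf_diff Y p - k0 p *s f p"
  have "?v = 0"
  proof (rule complete5[OF ff[OF p] YzYz[OF p] YzbYzb[OF p] YY[OF p] NnNn[OF p] YzYzb[OF p] _ YNn[OF p] _
     fYz[OF p] fYzb[OF p] fY[OF p] fNn[OF p] YzY[OF p] YzNn[OF p] YzbY[OF p] YzbNn[OF p]])
    show "lor ?v (f p) = 0"
      by (simp add: hopf_diff_def Yf[OF p] ff[OF p] k0_def)
    show "lor ?v (dz Y p) = 0"
      by (simp add: hopf_diff_def YzzYz[OF p] YYz[OF p] fYz[OF p])
    show "lor ?v (dzb Y p) = 0"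
      by (simp add: hopf_diff_def YzzYzb[OF p] YzbY[OF p, unfolded lor_sym[of "dzb Y p"]] fYzb[OF p])
    show "lor ?v (Y p) = 0"
      by (simp add: hopf_diff_def YzzY[OF p] YY[OF p] fY[OF p])
    show "lor ?v (Nn p) = 0"
      by (simp add: hopf_diff_def schw_eq[OF p] YNn[OF p] fNn[OF p])
  qed simp_all
  thus ?thesis by simp
qed

lemma f_nz: "p \<in> U \<Longrightarrow> f p \<noteq> 0" using ff by fastforce

lemma kfun_eq: "p \<in> U \<Longrightarrow> kfun Y f p = k0 p"
  unfolding kfun_def
proof (rule the_equality)
  assume p: "p \<in> U"
  show "hopf_diff Y p = k0 p *s f p" by (rule hopf_eq[OF p])
  fix c assume "hopf_diff Y p = c *s f p"
  hence "c *s f p = k0 p *s f p" using hopf_eq[OF p] by argo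
  thus "c = k0 p" using f_nz[OF p] by auto
qed

lemma Yzz_m: "p \<in> U \<Longrightarrow> lor (dz (dz Y) p) (m p) = - schwarzian Y p * \<mu> p"
proof -
  assume p: "p \<in> U"
  have "dz (dz Y) p = k0 p *s f p - (schwarzian Y p / 2) *s Y p"
    using hopf_eq[OF p] by (simp add: hopf_diff_def algebra_simps)
  thus ?thesis by (simp add: fm[OF p] Ym[OF p])
qed

end


context mt begin

lemma sfzz': "smooth_on U (dz (dz f))" using sfzz by (simp add: fzz_def)

lemma nEc: "smooth_on U (\<lambda>q. - Ec q)" by (rule smooth_on_uminus[OF oU sEc])

lemma dz_fzzb: "p \<in> U \<Longrightarrow> dz fzzb p = (- Ec p) *s fz p + dzs (\<lambda>q. - Ec q) p *s f p + (g p *s dz l p + dzs g p *s l p)"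
proof -
  assume p: "p \<in> U"
  have "dz fzzb p = dz (\<lambda>q. (- Ec q) *s f q + g q *s l q) p"
    by (rule dz_local[OF oU p]) (simp add: fzzb_eq)
  also have "\<dots> = dz (\<lambda>q. (- Ec q) *s f q) p + dz (\<lambda>q. g q *s l q) p"
    by (rule dz_add[OF dif[OF smooth_on_smult[OF oU nEc sf] p] dif[OF smooth_on_smult[OF oU sg sl] p]])
  also have "dz (\<lambda>q. (- Ec q) *s f q) p = (- Ec p) *s fz p + dzs (\<lambda>q. - Ec q) p *s f p"
    unfolding fz_def by (rule dz_smult[OF dif[OF nEc p] dif[OF sf p]])
  also have "dz (\<lambda>q. g q *s l q) p = g p *s dz l p + dzs g p *s l p"
    by (rule dz_smult[OF dif[OF sg p] dif[OF sl p]])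
  finally show ?thesis .
qed

lemma lfzz: "p \<in> U \<Longrightarrow> lor (fz p) (fzz p) = 0" using fzzfz by (simp add: lor_sym)

lemma dzbs_a: "p \<in> U \<Longrightarrow> dzbs a p = \<sigma> p * a p"
proof -
  assume p: "p \<in> U"
  have "dzbs a p = lor (dzb l p) (fzz p) + lor (l p) (dzb fzz p)"
    unfolding a_def[abs_def] by (rule dzbs_lor[OF dif[OF sl p] dif[OF sfzz p]])
  also have "dzb fzz p = dz fzzb p"
    unfolding fzz_def fzzb_def by (rule comm_dz_dzb[OF oU p smooth2[OF sfz[unfolded fz_def]]])
  also have "lor (l p) (dz fzzb p) = 0"
    unfolding dz_fzzb[OF p] by (simp add: lfz[OF p] lf[OF p] lzl'[OF p] ll[OF p])
  also have "lor (dzb l p) (fzz p) = \<sigma> p * a p"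
    unfolding lzb_eq[OF p] by (simp add: lfzz[OF p] a_def)
  finally show ?thesis by simp
qed

definition Pf where "Pf q = dzbs \<mu> q + \<mu> q * \<sigma> q"
definition Tt where "Tt q = \<mu> q * ab q * of_real (E q powr (- 1))"

lemma sE: "smooth_on U E"
proof -
  have "smooth_on U (\<lambda>q. Re (Ec q))" by (rule smooth_on_linear[OF oU bounded_linear_Re sEc])
  moreover have "\<forall>q\<in>U. Re (Ec q) = E q" by (simp add: EcE)
  ultimately show ?thesis by (rule smooth_on_local[OF oU, rotated])
qed

lemma sPf: "smooth_on U Pf"
  unfolding Pf_def[abs_def]
  by (rule smooth_on_add[OF oU smooth_on_dzbs[OF oU s\<mu>] smooth_on_mult[OF oU s\<mu> s\<sigma>]])
lemma sTt: "smooth_on U Tt"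
proof -
  have "smooth_on U (\<lambda>q. E q powr (- 1))" by (rule smooth_on_powr[OF oU _ sE]) (simp add: Epos)
  hence "smooth_on U (\<lambda>q. complex_of_real (E q powr (- 1)))" by (rule smooth_on_linear[OF oU bounded_linear_of_real])
  thus ?thesis unfolding Tt_def[abs_def] by (intro smooth_on_mult[OF oU] s\<mu> sab)
qed

lemma Tt_eq: "p \<in> U \<Longrightarrow> Tt p = \<mu> p * ab p / Ec p"
proof -
  assume p: "p \<in> U"
  have e: "E p > 0" using Epos[OF p] .
  hence "E p powr (- 1) = inverse (E p)" by (simp add: powr_minus)
  thus ?thesis using e by (simp add: Tt_def EcE[OF p] divide_inverse)
qed

lemma dzbs_k: "p \<in> U \<Longrightarrow> dzbs (kfun Y f) p = Pf p * a p"
proof -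
  assume p: "p \<in> U"
  have "dzbs (kfun Y f) p = dzbs (\<lambda>q. \<mu> q * a q) p"
    by (rule dzbs_local[OF oU p]) (simp add: kfun_eq k0_eq)
  also have "\<dots> = dzbs \<mu> p * a p + \<mu> p * dzbs a p" by (rule dzbs_mult[OF dif[OF s\<mu> p] dif[OF sa p]])
  finally show ?thesis by (simp add: dzbs_a[OF p] Pf_def algebra_simps)
qed

lemma dzbs_dzbs_k: "p \<in> U \<Longrightarrow> dzbs (dzbs (kfun Y f)) p = dzbs Pf p * a p + Pf p * \<sigma> p * a p"
proof -
  assume p: "p \<in> U"
  have "dzbs (dzbs (kfun Y f)) p = dzbs (\<lambda>q. Pf q * a q) p"
    by (rule dzbs_local[OF oU p]) (simp add: dzbs_k)
  also have "\<dots> = dzbs Pf p * a p + Pf p * dzbs a p" by (rule dzbs_mult[OF dif[OF sPf p] dif[OF sa p]])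
  finally show ?thesis by (simp add: dzbs_a[OF p] algebra_simps)
qed

lemma Yzb_eq2: "p \<in> U \<Longrightarrow> dzb Y p = Pf p *s l p + (- Tt p) *s fz p"
  unfolding Yzb_eq lzb_eq Tt_eq by (simp add: Pf_def vec_eq_iff algebra_simps)

lemma Yzbzb_eq: "p \<in> U \<Longrightarrow> dzb (dzb Y) p =
   Pf p *s dzb l p + dzbs Pf p *s l p + ((- Tt p) *s fzzb p + dzbs (\<lambda>q. - Tt q) p *s fz p)"
proof -
  assume p: "p \<in> U"
  have nT: "smooth_on U (\<lambda>q. - Tt q)" by (rule smooth_on_uminus[OF oU sTt])
  have "dzb (dzb Y) p = dzb (\<lambda>q. Pf q *s l q + (- Tt q) *s fz q) p"
    by (rule dzb_local[OF oU p]) (simp add: Yzb_eq2)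
  also have "\<dots> = dzb (\<lambda>q. Pf q *s l q) p + dzb (\<lambda>q. (- Tt q) *s fz q) p"
    by (rule dzb_add[OF dif[OF smooth_on_smult[OF oU sPf sl] p] dif[OF smooth_on_smult[OF oU nT sfz] p]])
  also have "dzb (\<lambda>q. Pf q *s l q) p = Pf p *s dzb l p + dzbs Pf p *s l p"
    by (rule dzb_smult[OF dif[OF sPf p] dif[OF sl p]])
  also have "dzb (\<lambda>q. (- Tt q) *s fz q) p = (- Tt p) *s fzzb p + dzbs (\<lambda>q. - Tt q) p *s fz p"
    unfolding fzzb_def fz_def by (rule dzb_smult[OF dif[OF nT p] dif[OF sfz[unfolded fz_def] p]])
  finally show ?thesis .
qed

lemma Yzbzb_cnj: "p \<in> U \<Longrightarrow> dzb (dzb Y) p = cnjv (dz (dz Y) p)"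
proof -
  assume p: "p \<in> U"
  have "dzb (dzb Y) p = dzb (\<lambda>q. cnjv (dz Y q)) p"
    by (rule dzb_local[OF oU p]) (simp add: Yzb_cnj)
  also have "\<dots> = cnjv (dz (dz Y) p)" by (rule dzb_cnjv[OF dif[OF sYz p]])
  finally show ?thesis .
qed

lemma fzzb_m: "p \<in> U \<Longrightarrow> lor (fzzb p) (m p) = 2 * g p" by (simp add: g_def)

lemma key: "p \<in> U \<Longrightarrow> - cnj (schwarzian Y p) * \<mu> p = 2 * Pf p * \<sigma> p + 2 * dzbs Pf p - 2 * Tt p * g p"
proof -
  assume p: "p \<in> U"
  have "lor (dzb (dzb Y) p) (m p) = cnj (lor (dz (dz Y) p) (m p))"
    by (simp add: Yzbzb_cnj[OF p] cnj_lor realm[OF p])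
  also have "\<dots> = - cnj (schwarzian Y p) * \<mu> p" by (simp add: Yzz_m[OF p])
  finally have A: "lor (dzb (dzb Y) p) (m p) = - cnj (schwarzian Y p) * \<mu> p" .
  have "lor (dzb (dzb Y) p) (m p) = 2 * Pf p * \<sigma> p + 2 * dzbs Pf p - 2 * Tt p * g p"
    unfolding Yzbzb_eq[OF p] by (simp add: lzbm[OF p] lm[OF p] fzzb_m[OF p] fzm[OF p] algebra_simps)
  thus ?thesis using A by simp
qed

lemma willmore_expr: "p \<in> U \<Longrightarrow>
   dzbs (dzbs (kfun Y f)) p + cnj (schwarzian Y p) / 2 * kfun Y f p = \<mu> p * a p * cnj (a p) * of_real (h p)"
proof -
  assume p: "p \<in> U"
  have k: "kfun Y f p = \<mu> p * a p" using kfun_eq[OF p] k0_eq[OF p] by simp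
  have Tg: "Tt p * g p = \<mu> p * cnj (a p) * of_real (h p)"
    using Epos[OF p] Ecnz[OF p] by (simp add: Tt_eq[OF p] g_eq[OF p] EcE[OF p] ab_cnj[OF p])
  have K: "cnj (schwarzian Y p) * \<mu> p = - 2 * Pf p * \<sigma> p - 2 * dzbs Pf p + 2 * Tt p * g p"
    using key[OF p] by (simp add: algebra_simps)
  have "dzbs (dzbs (kfun Y f)) p + cnj (schwarzian Y p) / 2 * kfun Y f p
      = dzbs Pf p * a p + Pf p * \<sigma> p * a p + (cnj (schwarzian Y p) * \<mu> p) / 2 * a p"
    by (simp add: dzbs_dzbs_k[OF p] k)
  also have "\<dots> = Tt p * g p * a p" unfolding K by (simp add: field_simps)
  also have "\<dots> = \<mu> p * a p * cnj (a p) * of_real (h p)" by (simp add: Tg)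
  finally show ?thesis .
qed

end


context mt begin

lemma l_nz: "p \<in> U \<Longrightarrow> l p \<noteq> 0" using lm by fastforce

lemma main: "(\<forall>p\<in>U. mean_curv f p = 0) \<longleftrightarrow> willmore_on U (canon_lift (\<lambda>q. N1 q + N2 q)) f"
proof -
  have A: "mean_curv f p = 0 \<longleftrightarrow> h p = 0" if p: "p \<in> U" for p
  proof -
    have "mean_curv f p = complex_of_real (h p) *s l p" using orientation p by (simp add: l_def)
    thus ?thesis using l_nz[OF p] by (simp del: vector_add_ldistrib)
  qed
  have B: "dzbs (dzbs (kfun Y f)) p + cnj (schwarzian Y p) / 2 * kfun Y f p = 0 \<longleftrightarrow> h p = 0" if p: "p \<in> U" for p
    unfolding willmore_expr[OF p] using \<mu>_nz[OF p] a_nz[OF p] by simp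
  show ?thesis unfolding willmore_on_def Y_def[symmetric] using A B by simp
qed

end

theorem mainTheorem9:
  fixes U :: "complex set" and f N1 N2 :: "complex \<Rightarrow> complex ^ 5" and h :: "complex \<Rightarrow> real"
  assumes immersion: "conformal_spacelike_immersion U f"
    and in_deSitter: "\<forall>p\<in>U. lor (f p) (f p) = 1"
    and frame: "normal_frame U f N1 N2"
    and marginally_trapped: "\<forall>p\<in>U. lor (mean_curv f p) (mean_curv f p) = 0"
    and orientation: "\<forall>p\<in>U. mean_curv f p = complex_of_real (h p) *s (N1 p + N2 p)"
    and non_isotropic: "\<forall>p\<in>U. (xi1 f N1 p)\<^sup>2 - (xi2 f N2 p)\<^sup>2 \<noteq> 0"
  shows "(\<forall>p\<in>U. mean_curv f p = 0) \<longleftrightarrow>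
         willmore_on U (canon_lift (\<lambda>q. N1 q + N2 q)) f"
proof -
  interpret mt U f N1 N2 h
    by (rule mt.intro) (fact immersion in_deSitter frame marginally_trapped orientation non_isotropic)+
  show ?thesis by (rule main)
qed


end
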